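(* Let $T_1, \ldots, T_k$ ($k\ge 2$) be rooted binary phylogenetic $X$-trees and let $F$ be a forest of $T_1$ that yields an agreement forest for $T_1, \ldots, T_k$. Suppose $t_i$ and $t_j$ are two components of $F$, with roots $r$ and $r'$, whose roots form a cycle, i.e. $t_i \to t_j$ and $t_j \to t_i$ are both arcs of $G_F$. Let $e^{a}(F, T_2, \ldots, T_k)$ denote the minimum number of edges that must be removed from $F$ to yield an acyclic agreement forest for $T_1,\dots,T_k$. Then there exist a child edge $e_r$ of $r$ and a child edge $e_{r'}$ of $r'$ in $F$ such that for some $x \in \{r, r'\}$, $$e^{a}(F - \{e_x\}, T_2, \ldots, T_k) = e^{a}(F, T_2, \ldots, T_k) - 1,$$ and consequently $$e^{a}(F - \{e_r, e_{r'}\}, T_2, \ldots, T_k) \leq e^{a}(F, T_2, \ldots, T_k) - 1.$$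
   Context: A rooted binary phylogenetic $X$-tree is a rooted tree whose leaves are bijectively labelled by the finite set $X$, whose root has out-degree 2, and all of whose other internal vertices have in-degree 1 and out-degree 2. For a tree $T$ and $Y \subseteq X$, $T(Y)$ denotes the minimal subtree of $T$ connecting the leaves in $Y$, and $T|Y$ the tree obtained from $T(Y)$ by suppressing vertices of degree 2. A forest of $T_1$ is a graph $F$ obtained from $T_1$ by deleting a set of edges; $F-E$ "yields" the forest obtained by deleting the edge set $E$, discarding components without labelled leaves, and suppressing degree-2 vertices. An agreement forest for $T_1, \ldots, T_k$ is a collection $\{t_1, \ldots, t_n\}$ of rooted binary phylogenetic trees with $L(t_1) \cup \cdots \cup L(t_n) = X$ (disjointly) such that for every tree $T_l$: each $t_m$ equals $T_l|L(t_m)$, and the subtrees $T_l(L(t_m))$, $m=1,\ldots,n$, are pairwise vertex-disjoint. For an agreement forest $F=\{t_1,\dots,t_n\}$, $G_F$ is the directed graph with vertex set $F$ and an arc $t_i \to t_j$ ($i \neq j$) whenever, for some $l \in \{1,\ldots,k\}$, the root of $T_l(L(t_i))$ is an ancestor of the root of $T_l(L(t_j))$. The agreement forest is acyclic if $G_F$ has no directed cycle. *)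

theory Defs
  imports Main
begin

text \<open>A rooted tree on vertex type 'v whose leaves are labelled by elements of type 'x.
  Arcs are directed parent-to-child.\<close>
record ('x, 'v) ptree =
  verts :: "'v set"
  arcs  :: "('v \<times> 'v) set"
  lbl   :: "'x \<Rightarrow> 'v"

definition children :: "('x, 'v) ptree \<Rightarrow> 'v \<Rightarrow> 'v set" where
  "children T v = {w. (v, w) \<in> arcs T}"

definition parents :: "('x, 'v) ptree \<Rightarrow> 'v \<Rightarrow> 'v set" where
  "parents T v = {u. (u, v) \<in> arcs T}"

definition leaves :: "('x, 'v) ptree \<Rightarrow> 'v set" where
  "leaves T = {v \<in> verts T. children T v = {}}"

definition is_root :: "('x, 'v) ptree \<Rightarrow> 'v \<Rightarrow> bool" where
  "is_root T \<rho> \<longleftrightarrow> \<rho> \<in> verts T \<and> parents T \<rho> = {} \<and>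
     (\<forall>v \<in> verts T. (\<rho>, v) \<in> (arcs T)\<^sup>*)"

definition phylo_tree :: "'x set \<Rightarrow> ('x, 'v) ptree \<Rightarrow> bool" where
  "phylo_tree X T \<longleftrightarrow>
     finite (verts T) \<and> arcs T \<subseteq> verts T \<times> verts T \<and> acyclic (arcs T) \<and>
     (\<exists>\<rho>. is_root T \<rho> \<and> card (children T \<rho>) = 2 \<and>
        (\<forall>v \<in> verts T - {\<rho>}. card (parents T v) = 1 \<and>
                                (children T v = {} \<or> card (children T v) = 2))) \<and>
     bij_betw (lbl T) X (leaves T)"

definition clus :: "'x set \<Rightarrow> ('x, 'v) ptree \<Rightarrow> 'v \<Rightarrow> 'x set" where
  "clus X T v = {x \<in> X. (v, lbl T x) \<in> (arcs T)\<^sup>*}"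

text \<open>Root of T(Y), i.e. the lowest common ancestor of the leaves labelled by Y.\<close>
definition lca :: "'x set \<Rightarrow> ('x, 'v) ptree \<Rightarrow> 'x set \<Rightarrow> 'v" where
  "lca X T Y = (THE v. v \<in> verts T \<and> Y \<subseteq> clus X T v \<and>
                  (\<forall>w \<in> verts T. Y \<subseteq> clus X T w \<longrightarrow> (w, v) \<in> (arcs T)\<^sup>*))"

text \<open>Vertex set of the minimal subtree T(Y) connecting the leaves labelled by Y.\<close>
definition span :: "'x set \<Rightarrow> ('x, 'v) ptree \<Rightarrow> 'x set \<Rightarrow> 'v set" where
  "span X T Y = {v \<in> verts T. (lca X T Y, v) \<in> (arcs T)\<^sup>* \<and> clus X T v \<inter> Y \<noteq> {}}"

text \<open>The cluster set of T|Y (a rooted phylogenetic tree is determined up to label-preserving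
  isomorphism by its cluster set).\<close>
definition restr_clusters :: "'x set \<Rightarrow> ('x, 'v) ptree \<Rightarrow> 'x set \<Rightarrow> 'x set set" where
  "restr_clusters X T Y = {clus X T v \<inter> Y | v. v \<in> verts T \<and> clus X T v \<inter> Y \<noteq> {}}"

text \<open>Agreement forest for the trees in Ts (first tree T1 = hd Ts), given by the leaf sets of its
  components; the component with leaf set B is the tree T1|B.\<close>
definition agreement_forest :: "'x set \<Rightarrow> ('x, 'v) ptree list \<Rightarrow> 'x set set \<Rightarrow> bool" where
  "agreement_forest X Ts P \<longleftrightarrow>
     (\<forall>B \<in> P. B \<noteq> {}) \<and> \<Union>P = X \<and>
     (\<forall>B \<in> P. \<forall>B' \<in> P. B \<noteq> B' \<longrightarrow> B \<inter> B' = {}) \<and>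
     (\<forall>T \<in> set Ts. \<forall>B \<in> P. restr_clusters X T B = restr_clusters X (hd Ts) B) \<and>
     (\<forall>T \<in> set Ts. \<forall>B \<in> P. \<forall>B' \<in> P. B \<noteq> B' \<longrightarrow> span X T B \<inter> span X T B' = {})"

definition gf_arc :: "'x set \<Rightarrow> ('x, 'v) ptree list \<Rightarrow> 'x set \<Rightarrow> 'x set \<Rightarrow> bool" where
  "gf_arc X Ts B B' \<longleftrightarrow> B \<noteq> B' \<and> (\<exists>T \<in> set Ts. (lca X T B, lca X T B') \<in> (arcs T)\<^sup>*)"

definition GF :: "'x set \<Rightarrow> ('x, 'v) ptree list \<Rightarrow> 'x set set \<Rightarrow> ('x set \<times> 'x set) set" where
  "GF X Ts P = {(B, B'). B \<in> P \<and> B' \<in> P \<and> gf_arc X Ts B B'}"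

definition acyclic_af :: "'x set \<Rightarrow> ('x, 'v) ptree list \<Rightarrow> 'x set set \<Rightarrow> bool" where
  "acyclic_af X Ts P \<longleftrightarrow> agreement_forest X Ts P \<and> acyclic (GF X Ts P)"

text \<open>A forest of T1 is given by the set D of deleted arcs of T1.  The forest it yields is
  described by the label sets of its components containing labelled leaves (the yielded
  component with leaf set B is T1|B).\<close>
definition yield :: "'x set \<Rightarrow> ('x, 'v) ptree \<Rightarrow> ('v \<times> 'v) set \<Rightarrow> 'x set set" where
  "yield X T1 D = (let R = arcs T1 - D in
     {{x \<in> X. (lbl T1 x, lbl T1 y) \<in> (R \<union> R\<inverse>)\<^sup>*} | y. y \<in> X})"

definition ea :: "'x set \<Rightarrow> ('x, 'v) ptree list \<Rightarrow> ('v \<times> 'v) set \<Rightarrow> nat" where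
  "ea X Ts D = (LEAST n. \<exists>E. E \<subseteq> arcs (hd Ts) - D \<and> card E = n \<and>
                              acyclic_af X Ts (yield X (hd Ts) (D \<union> E)))"

end

theory Submission
  imports Defs
begin


locale phy =
  fixes X :: "'x set" and T :: "('x,'v) ptree"
  assumes ph: "phylo_tree X T"
begin

lemma fin_verts: "finite (verts T)" using ph unfolding phylo_tree_def by blast
lemma arcs_sub: "arcs T \<subseteq> verts T \<times> verts T" using ph unfolding phylo_tree_def by blast
lemma fin_arcs: "finite (arcs T)" using arcs_sub fin_verts finite_subset by blast
lemma acyc: "acyclic (arcs T)" using ph unfolding phylo_tree_def by blast
lemma arc_verts: "(a,b) \<in> arcs T \<Longrightarrow> a \<in> verts T \<and> b \<in> verts T" using arcs_sub by blast

lemma root_ex: obtains \<rho> where "is_root T \<rho>" "card (children T \<rho>) = 2"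
  "\<forall>v \<in> verts T - {\<rho>}. card (parents T v) = 1 \<and> (children T v = {} \<or> card (children T v) = 2)"
proof -
  from ph obtain \<rho> where a: "is_root T \<rho>" "card (children T \<rho>) = 2"
    "\<forall>v \<in> verts T - {\<rho>}. card (parents T v) = 1 \<and> (children T v = {} \<or> card (children T v) = 2)"
    unfolding phylo_tree_def by blast
  show thesis by (rule that[OF a])
qed

lemma lbl_bij: "bij_betw (lbl T) X (leaves T)" using ph unfolding phylo_tree_def by blast

lemma unique_parent: assumes "(p,z) \<in> arcs T" "(q,z) \<in> arcs T" shows "p = q"
proof -
  obtain \<rho> where r: "is_root T \<rho>" "card (children T \<rho>) = 2"
    "\<forall>v \<in> verts T - {\<rho>}. card (parents T v) = 1 \<and> (children T v = {} \<or> card (children T v) = 2)"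
    by (rule root_ex)
  have "z \<noteq> \<rho>" using r(1) assms(1) unfolding is_root_def parents_def by blast
  moreover have "z \<in> verts T" using arc_verts assms by blast
  ultimately have "card (parents T z) = 1" using r(3) by blast
  moreover have "p \<in> parents T z" "q \<in> parents T z" using assms unfolding parents_def by auto
  ultimately show ?thesis by (metis card_1_singletonE singletonD)
qed

lemma antisym_rt: assumes "(a,b) \<in> (arcs T)\<^sup>*" "(b,a) \<in> (arcs T)\<^sup>*" shows "a = b"
proof (rule ccontr)
  assume "a \<noteq> b"
  then have "(a,b) \<in> (arcs T)\<^sup>+" using assms(1) by (metis rtrancl_eq_or_trancl)
  then have "(a,a) \<in> (arcs T)\<^sup>+" using assms(2) by simp
  then show False using acyc unfolding acyclic_def by blast
qed

lemma not_trancl_back: assumes "(a,b) \<in> (arcs T)\<^sup>+" "(b,a) \<in> (arcs T)\<^sup>*" shows False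
proof -
  have "(a,a) \<in> (arcs T)\<^sup>+" using assms by simp
  then show False using acyc unfolding acyclic_def by blast
qed

lemma up_step: assumes "(w,z) \<in> (arcs T)\<^sup>*" "w \<noteq> z"
  shows "\<exists>p. (p,z) \<in> arcs T \<and> (w,p) \<in> (arcs T)\<^sup>*"
  using assms by (metis rtranclE)

lemma chain: assumes "(a,z) \<in> (arcs T)\<^sup>*" "(b,z) \<in> (arcs T)\<^sup>*"
  shows "(a,b) \<in> (arcs T)\<^sup>* \<or> (b,a) \<in> (arcs T)\<^sup>*"
  using assms
proof (induction arbitrary: b rule: rtrancl_induct)
  case base then show ?case by blast
next
  case (step y z)
  show ?case
  proof (cases "b = z")
    case True then show ?thesis using step by (meson rtrancl.rtrancl_into_rtrancl)
  next
    case False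
    then obtain p where "(p,z) \<in> arcs T" "(b,p) \<in> (arcs T)\<^sup>*" using up_step step.prems by blast
    then have "p = y" using unique_parent step.hyps(2) by blast
    then show ?thesis using step.IH \<open>(b,p) \<in> _\<close> by blast
  qed
qed

lemma child_below: assumes "(r,w) \<in> (arcs T)\<^sup>+" shows "\<exists>c \<in> children T r. (c,w) \<in> (arcs T)\<^sup>*"
  using assms unfolding children_def by (metis mem_Collect_eq tranclD)

lemma siblings: assumes "c \<in> children T r" "d \<in> children T r" "c \<noteq> d"
  "(c,z) \<in> (arcs T)\<^sup>*" "(d,z) \<in> (arcs T)\<^sup>*" shows False
proof -
  have rc: "(r,c) \<in> arcs T" "(r,d) \<in> arcs T" using assms(1,2) unfolding children_def by auto
  from chain[OF assms(4,5)] consider "(c,d) \<in> (arcs T)\<^sup>*" | "(d,c) \<in> (arcs T)\<^sup>*" by blast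
  then show False
  proof cases
    case 1
    obtain p where "(p,d) \<in> arcs T" "(c,p) \<in> (arcs T)\<^sup>*" using up_step[OF 1 assms(3)] by blast
    then have "p = r" using unique_parent rc by blast
    then show False using not_trancl_back[of r c] rc \<open>(c,p) \<in> _\<close> by blast
  next
    case 2
    obtain p where "(p,c) \<in> arcs T" "(d,p) \<in> (arcs T)\<^sup>*" using up_step[OF 2] assms(3) by metis
    then have "p = r" using unique_parent rc by blast
    then show False using not_trancl_back[of r d] rc \<open>(d,p) \<in> _\<close> by blast
  qed
qed

lemma lbl_leaf: "x \<in> X \<Longrightarrow> lbl T x \<in> verts T \<and> children T (lbl T x) = {}"
  using lbl_bij unfolding bij_betw_def leaves_def by blast

lemma lbl_inj: "x \<in> X \<Longrightarrow> y \<in> X \<Longrightarrow> lbl T x = lbl T y \<Longrightarrow> x = y"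
  using lbl_bij unfolding bij_betw_def inj_on_def by blast

lemma leaf_down: assumes "x \<in> X" "(lbl T x, v) \<in> (arcs T)\<^sup>*" shows "v = lbl T x"
  using assms(2) lbl_leaf[OF assms(1)] unfolding children_def
  by (metis converse_rtranclE empty_iff mem_Collect_eq)

lemma leaf_anc: "x \<in> X \<Longrightarrow> y \<in> X \<Longrightarrow> (lbl T x, lbl T y) \<in> (arcs T)\<^sup>* \<Longrightarrow> x = y"
  using leaf_down lbl_inj by metis

lemma root_anc: assumes "is_root T \<rho>" "v \<in> verts T" shows "(\<rho>, v) \<in> (arcs T)\<^sup>*"
  using assms unfolding is_root_def by blast

lemma clus_iff: "x \<in> clus X T v \<longleftrightarrow> x \<in> X \<and> (v, lbl T x) \<in> (arcs T)\<^sup>*"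
  unfolding clus_def by blast

lemma clus_mono: "(a,b) \<in> (arcs T)\<^sup>* \<Longrightarrow> clus X T b \<subseteq> clus X T a"
  unfolding clus_def by auto

lemma wf_arcs: "wf (arcs T)" using finite_acyclic_wf[OF fin_arcs acyc] .

lemma lowest_ex: assumes "v \<in> Q" "Q \<subseteq> verts T"
  shows "\<exists>z \<in> Q. \<forall>y. (z,y) \<in> (arcs T)\<^sup>+ \<longrightarrow> y \<notin> Q"
proof -
  have "wf ((arcs T)\<inverse>)" using finite_acyclic_wf_converse[OF fin_arcs acyc] .
  then have "wf (((arcs T)\<inverse>)\<^sup>+)" by (rule wf_trancl)
  then have "\<exists>z\<in>Q. \<forall>y. (y, z) \<in> ((arcs T)\<inverse>)\<^sup>+ \<longrightarrow> y \<notin> Q"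
    using assms(1) unfolding wf_eq_minimal by blast
  then show ?thesis unfolding trancl_converse by blast
qed

lemma highest_ex: assumes "v \<in> Q"
  shows "\<exists>z \<in> Q. \<forall>y. (y,z) \<in> (arcs T)\<^sup>+ \<longrightarrow> y \<notin> Q"
proof -
  have "wf ((arcs T)\<^sup>+)" using wf_trancl[OF wf_arcs] .
  then show ?thesis using assms(1) unfolding wf_eq_minimal by blast
qed

definition is_lca where
  "is_lca Y v \<longleftrightarrow> v \<in> verts T \<and> Y \<subseteq> clus X T v \<and>
      (\<forall>w \<in> verts T. Y \<subseteq> clus X T w \<longrightarrow> (w, v) \<in> (arcs T)\<^sup>*)"

lemma lca_ex: assumes "Y \<subseteq> X" "Y \<noteq> {}" shows "\<exists>v. is_lca Y v"
proof -
  obtain \<rho> where r: "is_root T \<rho>" by (rule root_ex)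
  define Q where "Q = {w \<in> verts T. Y \<subseteq> clus X T w}"
  have "\<rho> \<in> Q" unfolding Q_def clus_def using r assms(1) root_anc lbl_leaf
    by (auto simp: is_root_def)
  obtain z where z: "z \<in> Q" "\<forall>y. (z,y) \<in> (arcs T)\<^sup>+ \<longrightarrow> y \<notin> Q"
    using lowest_ex[OF \<open>\<rho> \<in> Q\<close>] Q_def by blast
  obtain y where y: "y \<in> Y" using assms by blast
  have "(w, z) \<in> (arcs T)\<^sup>*" if "w \<in> verts T" "Y \<subseteq> clus X T w" for w
  proof -
    have "(w, lbl T y) \<in> (arcs T)\<^sup>*" "(z, lbl T y) \<in> (arcs T)\<^sup>*"
      using that z y unfolding Q_def clus_def by auto
    from chain[OF this] show ?thesis
    proof
      assume "(z, w) \<in> (arcs T)\<^sup>*"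
      then have "z = w \<or> (z,w) \<in> (arcs T)\<^sup>+" by (metis rtrancl_eq_or_trancl)
      then show ?thesis using z that unfolding Q_def by auto
    qed
  qed
  then show ?thesis using z unfolding is_lca_def Q_def by blast
qed

lemma lca_props: assumes "Y \<subseteq> X" "Y \<noteq> {}" shows "is_lca Y (lca X T Y)"
proof -
  obtain v where v: "is_lca Y v" using lca_ex assms by blast
  have "lca X T Y = v" unfolding lca_def
  proof (rule the_equality)
    show "v \<in> verts T \<and> Y \<subseteq> clus X T v \<and> (\<forall>w\<in>verts T. Y \<subseteq> clus X T w \<longrightarrow> (w, v) \<in> (arcs T)\<^sup>*)"
      using v unfolding is_lca_def by blast
    fix u assume "u \<in> verts T \<and> Y \<subseteq> clus X T u \<and> (\<forall>w\<in>verts T. Y \<subseteq> clus X T w \<longrightarrow> (w, u) \<in> (arcs T)\<^sup>*)"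
    then show "u = v" using v antisym_rt unfolding is_lca_def by blast
  qed
  then show ?thesis using v by simp
qed

lemma lca_in: "Y \<subseteq> X \<Longrightarrow> Y \<noteq> {} \<Longrightarrow> lca X T Y \<in> verts T"
  using lca_props is_lca_def by blast
lemma lca_clus: "Y \<subseteq> X \<Longrightarrow> Y \<noteq> {} \<Longrightarrow> Y \<subseteq> clus X T (lca X T Y)"
  using lca_props is_lca_def by blast
lemma lca_low: "Y \<subseteq> X \<Longrightarrow> Y \<noteq> {} \<Longrightarrow> w \<in> verts T \<Longrightarrow> Y \<subseteq> clus X T w \<Longrightarrow> (w, lca X T Y) \<in> (arcs T)\<^sup>*"
  using lca_props is_lca_def by blast

lemma lca_single: assumes "x \<in> X" shows "lca X T {x} = lbl T x"
proof -
  have "is_lca {x} (lbl T x)" unfolding is_lca_def clus_def using assms lbl_leaf by auto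
  moreover have "is_lca {x} (lca X T {x})" using lca_props assms by blast
  ultimately show ?thesis unfolding is_lca_def using antisym_rt by blast
qed

lemma lca_mono: "B1 \<subseteq> B \<Longrightarrow> B \<subseteq> X \<Longrightarrow> B1 \<noteq> {} \<Longrightarrow> (lca X T B, lca X T B1) \<in> (arcs T)\<^sup>*"
proof -
  assume a: "B1 \<subseteq> B" "B \<subseteq> X" "B1 \<noteq> {}"
  then have "B \<noteq> {}" by blast
  have "B1 \<subseteq> clus X T (lca X T B)" using lca_clus[OF a(2) \<open>B \<noteq> {}\<close>] a(1) by blast
  moreover have "B1 \<subseteq> X" using a by blast
  ultimately show ?thesis using lca_low[of B1 "lca X T B"] lca_in[OF a(2) \<open>B \<noteq> {}\<close>] a(3) by blast
qed

lemma span_mono: assumes "B1 \<subseteq> B" "B \<subseteq> X" "B1 \<noteq> {}" shows "span X T B1 \<subseteq> span X T B"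
proof
  fix v assume "v \<in> span X T B1"
  then have v: "v \<in> verts T" "(lca X T B1, v) \<in> (arcs T)\<^sup>*" "clus X T v \<inter> B1 \<noteq> {}"
    unfolding span_def by auto
  have "(lca X T B, v) \<in> (arcs T)\<^sup>*" using lca_mono[OF assms] v(2) by simp
  moreover have "clus X T v \<inter> B \<noteq> {}" using v(3) assms(1) by blast
  ultimately show "v \<in> span X T B" using v(1) unfolding span_def by blast
qed

lemma lca_in_span: "Y \<subseteq> X \<Longrightarrow> Y \<noteq> {} \<Longrightarrow> lca X T Y \<in> span X T Y"
proof -
  assume a: "Y \<subseteq> X" "Y \<noteq> {}"
  have "clus X T (lca X T Y) \<inter> Y \<noteq> {}" using lca_clus[OF a] a(2) by blast
  then show ?thesis unfolding span_def using lca_in[OF a] by blast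
qed

end


context phy begin

definition sf :: "'v set \<Rightarrow> 'x \<Rightarrow> 'x \<Rightarrow> bool" where
  "sf W x y \<longleftrightarrow> (\<forall>w\<in>W. (w, lbl T x) \<in> (arcs T)\<^sup>* \<longleftrightarrow> (w, lbl T y) \<in> (arcs T)\<^sup>*)"

definition part :: "'v set \<Rightarrow> 'x set set" where
  "part W = {{x \<in> X. sf W x y} | y. y \<in> X}"

lemma sf_refl: "sf W x x" unfolding sf_def by blast
lemma sf_sym: "sf W x y \<Longrightarrow> sf W y x" unfolding sf_def by blast
lemma sf_trans: "sf W x y \<Longrightarrow> sf W y z \<Longrightarrow> sf W x z" unfolding sf_def by blast
lemma sf_mono: "W1 \<subseteq> W2 \<Longrightarrow> sf W2 x y \<Longrightarrow> sf W1 x y" unfolding sf_def by blast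

lemma step_inv: assumes "S \<subseteq> arcs T" "(a,b) \<in> arcs T - S" "(u,w) \<in> S"
  shows "(w,a) \<in> (arcs T)\<^sup>* \<longleftrightarrow> (w,b) \<in> (arcs T)\<^sup>*"
proof
  assume "(w,a) \<in> (arcs T)\<^sup>*" then show "(w,b) \<in> (arcs T)\<^sup>*" using assms(2) by auto
next
  assume h: "(w,b) \<in> (arcs T)\<^sup>*"
  show "(w,a) \<in> (arcs T)\<^sup>*"
  proof (cases "w = b")
    case True
    then have "u = a" using unique_parent assms by blast
    then show ?thesis using assms True by blast
  next
    case False
    then obtain p where "(p,b) \<in> arcs T" "(w,p) \<in> (arcs T)\<^sup>*" using up_step h by blast
    then show ?thesis using unique_parent assms(2) by blast
  qed
qed

lemma path_inv: assumes "S \<subseteq> arcs T" "(a,b) \<in> ((arcs T - S) \<union> (arcs T - S)\<inverse>)\<^sup>*" "w \<in> snd ` S"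
  shows "(w,a) \<in> (arcs T)\<^sup>* \<longleftrightarrow> (w,b) \<in> (arcs T)\<^sup>*"
  using assms(2)
proof (induction rule: rtrancl_induct)
  case base then show ?case by simp
next
  case (step y z)
  obtain u where u: "(u,w) \<in> S" using assms(3) by force
  from step.hyps(2) show ?case
  proof
    assume "(y,z) \<in> arcs T - S" then show ?thesis using step.IH step_inv[OF assms(1) _ u] by blast
  next
    assume "(y,z) \<in> (arcs T - S)\<inverse>" then have "(z,y) \<in> arcs T - S" by simp
    then show ?thesis using step.IH step_inv[OF assms(1) _ u] by blast
  qed
qed

lemma down_path: assumes "(a,z) \<in> (arcs T)\<^sup>*"
  "\<forall>p c. (p,c) \<in> S \<longrightarrow> (c,z) \<in> (arcs T)\<^sup>* \<longrightarrow> (a,c) \<notin> (arcs T)\<^sup>+"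
  shows "(a,z) \<in> (arcs T - S)\<^sup>*"
  using assms
proof (induction rule: rtrancl_induct)
  case base then show ?case by simp
next
  case (step y z)
  have "(a,y) \<in> (arcs T - S)\<^sup>*"
    using step.IH step.prems step.hyps(2) by (meson rtrancl.rtrancl_into_rtrancl)
  moreover have "(y,z) \<notin> S"
  proof
    assume "(y,z) \<in> S"
    moreover have "(a,z) \<in> (arcs T)\<^sup>+" using step.hyps by simp
    ultimately show False using step.prems by blast
  qed
  ultimately show ?case using step.hyps(2) by (meson Diff_iff rtrancl.rtrancl_into_rtrancl)
qed

lemma conn_iff: assumes "S \<subseteq> arcs T" "x \<in> X" "y \<in> X"
  shows "(lbl T x, lbl T y) \<in> ((arcs T - S) \<union> (arcs T - S)\<inverse>)\<^sup>* \<longleftrightarrow> sf (snd ` S) x y"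
proof
  assume "(lbl T x, lbl T y) \<in> ((arcs T - S) \<union> (arcs T - S)\<inverse>)\<^sup>*"
  then show "sf (snd ` S) x y" unfolding sf_def using path_inv[OF assms(1)] by blast
next
  assume sf: "sf (snd ` S) x y"
  define a where "a = lca X T {x,y}"
  have xy: "{x,y} \<subseteq> X" "{x,y} \<noteq> {}" using assms by auto
  have ax: "(a, lbl T x) \<in> (arcs T)\<^sup>*" "(a, lbl T y) \<in> (arcs T)\<^sup>*"
    using lca_clus[OF xy] unfolding a_def clus_def by auto
  have key: "(a,c) \<notin> (arcs T)\<^sup>+" if "(p,c) \<in> S" "(c, lbl T x) \<in> (arcs T)\<^sup>* \<or> (c, lbl T y) \<in> (arcs T)\<^sup>*" for p c
  proof
    assume ac: "(a,c) \<in> (arcs T)\<^sup>+"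
    have "c \<in> snd ` S" using that by force
    then have "(c, lbl T x) \<in> (arcs T)\<^sup>*" "(c, lbl T y) \<in> (arcs T)\<^sup>*" using sf that unfolding sf_def by blast+
    then have "{x,y} \<subseteq> clus X T c" unfolding clus_def using assms by auto
    moreover have "c \<in> verts T" using that assms(1) arc_verts by blast
    ultimately have "(c,a) \<in> (arcs T)\<^sup>*" using lca_low[OF xy] unfolding a_def by blast
    then show False using not_trancl_back ac by blast
  qed
  have "(a, lbl T x) \<in> (arcs T - S)\<^sup>*" using down_path[OF ax(1)] key by blast
  moreover have "(a, lbl T y) \<in> (arcs T - S)\<^sup>*" using down_path[OF ax(2)] key by blast
  ultimately show "(lbl T x, lbl T y) \<in> ((arcs T - S) \<union> (arcs T - S)\<inverse>)\<^sup>*"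
  proof -
    let ?R = "(arcs T - S) \<union> (arcs T - S)\<inverse>"
    assume h1: "(a, lbl T x) \<in> (arcs T - S)\<^sup>*" and h2: "(a, lbl T y) \<in> (arcs T - S)\<^sup>*"
    have "(lbl T x, a) \<in> ((arcs T - S)\<inverse>)\<^sup>*" using h1 by (simp add: rtrancl_converse)
    then have "(lbl T x, a) \<in> ?R\<^sup>*" by (rule rtrancl_mono[THEN subsetD, rotated]) blast
    moreover have "(a, lbl T y) \<in> ?R\<^sup>*" using h2 by (rule rtrancl_mono[THEN subsetD, rotated]) blast
    ultimately show ?thesis by simp
  qed
qed

lemma yield_char: assumes "S \<subseteq> arcs T" shows "yield X T S = part (snd ` S)"
proof -
  have "{x \<in> X. (lbl T x, lbl T y) \<in> ((arcs T - S) \<union> (arcs T - S)\<inverse>)\<^sup>*} = {x \<in> X. sf (snd ` S) x y}"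
    if "y \<in> X" for y using conn_iff[OF assms _ that] by blast
  then show ?thesis unfolding yield_def part_def Let_def by blast
qed

lemma part_cls: "K \<in> part W \<Longrightarrow> \<exists>y \<in> X. K = {x \<in> X. sf W x y}" unfolding part_def by blast

lemma part_ne: "K \<in> part W \<Longrightarrow> K \<noteq> {}" unfolding part_def using sf_refl by blast

lemma part_sub: "K \<in> part W \<Longrightarrow> K \<subseteq> X" unfolding part_def by blast

lemma part_mem: "K \<in> part W \<Longrightarrow> x \<in> K \<Longrightarrow> K = {z \<in> X. sf W z x}"
  unfolding part_def using sf_sym sf_trans by blast

lemma part_same: "K \<in> part W \<Longrightarrow> x \<in> K \<Longrightarrow> y \<in> K \<Longrightarrow> sf W x y"
  using part_mem by blast

lemma part_in: "x \<in> X \<Longrightarrow> {z \<in> X. sf W z x} \<in> part W" unfolding part_def by blast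

lemma part_eq: assumes "\<And>x y. x \<in> X \<Longrightarrow> y \<in> X \<Longrightarrow> sf W1 x y \<longleftrightarrow> sf W2 x y"
  shows "part W1 = part W2"
proof -
  have "{x \<in> X. sf W1 x y} = {x \<in> X. sf W2 x y}" if "y \<in> X" for y using assms that by blast
  then show ?thesis unfolding part_def by blast
qed

end


lemma rc_sub: assumes "B1 \<subseteq> B"
  shows "restr_clusters X T B1 = {Z \<inter> B1 | Z. Z \<in> restr_clusters X T B \<and> Z \<inter> B1 \<noteq> {}}"
  unfolding restr_clusters_def using assms by blast

lemma af_union: "agreement_forest X Ts P \<Longrightarrow> \<Union>P = X" by (simp add: agreement_forest_def)
lemma af_sub: "agreement_forest X Ts P \<Longrightarrow> K \<in> P \<Longrightarrow> K \<subseteq> X" using af_union by blast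
lemma af_ne: "agreement_forest X Ts P \<Longrightarrow> K \<in> P \<Longrightarrow> K \<noteq> {}" by (simp add: agreement_forest_def)
lemma af_disj: "agreement_forest X Ts P \<Longrightarrow> K \<in> P \<Longrightarrow> K' \<in> P \<Longrightarrow> K \<noteq> K' \<Longrightarrow> K \<inter> K' = {}"
  by (simp add: agreement_forest_def)
lemma af_rc: "agreement_forest X Ts P \<Longrightarrow> T \<in> set Ts \<Longrightarrow> K \<in> P \<Longrightarrow> restr_clusters X T K = restr_clusters X (hd Ts) K"
  by (simp add: agreement_forest_def)
lemma af_span: "agreement_forest X Ts P \<Longrightarrow> T \<in> set Ts \<Longrightarrow> K \<in> P \<Longrightarrow> K' \<in> P \<Longrightarrow> K \<noteq> K' \<Longrightarrow> span X T K \<inter> span X T K' = {}"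
  by (simp add: agreement_forest_def)
lemma af_intro: "(\<forall>B \<in> P. B \<noteq> {}) \<Longrightarrow> \<Union>P = X \<Longrightarrow>
     (\<forall>B \<in> P. \<forall>B' \<in> P. B \<noteq> B' \<longrightarrow> B \<inter> B' = {}) \<Longrightarrow>
     (\<forall>T \<in> set Ts. \<forall>B \<in> P. restr_clusters X T B = restr_clusters X (hd Ts) B) \<Longrightarrow>
     (\<forall>T \<in> set Ts. \<forall>B \<in> P. \<forall>B' \<in> P. B \<noteq> B' \<longrightarrow> span X T B \<inter> span X T B' = {}) \<Longrightarrow>
     agreement_forest X Ts P" by (simp add: agreement_forest_def)

locale multi =
  fixes X :: "'x set" and Ts :: "('x,'v) ptree list"
  assumes allph: "\<forall>T\<in>set Ts. phylo_tree X T" and ne: "Ts \<noteq> []"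
begin

lemma phyT: "T \<in> set Ts \<Longrightarrow> phy X T" unfolding phy_def using allph by blast
lemma hd_in: "hd Ts \<in> set Ts" using ne by simp

sublocale t1: phy X "hd Ts" using phyT hd_in by blast

abbreviation "T1 \<equiv> hd Ts"

lemma anc_verts: assumes "(c, v) \<in> (arcs T)\<^sup>*" "v \<in> verts T" "T \<in> set Ts" shows "c \<in> verts T"
  using assms(1)
proof (cases rule: converse_rtranclE)
  case base then show ?thesis using assms(2) by simp
next
  case (step c') then show ?thesis using phy.arc_verts[OF phyT[OF assms(3)]] by blast
qed

lemma half_rc: assumes "agreement_forest X Ts P" "K \<in> P" "T \<in> set Ts"
  "A = {x \<in> K. (c, lbl T1 x) \<in> (arcs T1)\<^sup>*}" "A \<noteq> {}"
  shows "\<exists>v \<in> verts T. A = clus X T v \<inter> K"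
proof -
  obtain x where x: "x \<in> A" using assms(5) by blast
  have KX: "K \<subseteq> X" using af_sub assms(1,2) by blast
  then have "lbl T1 x \<in> verts T1" using x assms(4) t1.lbl_leaf by blast
  then have cv: "c \<in> verts T1" using anc_verts[OF _ _ hd_in] x assms(4) by blast
  have "A = clus X T1 c \<inter> K" unfolding assms(4) clus_def using KX by auto
  then have "A \<in> restr_clusters X T1 K" unfolding restr_clusters_def using cv assms(5) by blast
  moreover have "restr_clusters X T K = restr_clusters X T1 K"
    using af_rc assms(1,2,3) by blast
  ultimately show ?thesis unfolding restr_clusters_def by blast
qed

lemma half_span: assumes "agreement_forest X Ts P" "K \<in> P" "T \<in> set Ts"
  "A = {x \<in> K. (c, lbl T1 x) \<in> (arcs T1)\<^sup>*}" "A \<noteq> {}" "K - A \<noteq> {}"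
  shows "span X T A \<inter> span X T (K - A) = {}"
proof -
  interpret p: phy X T using phyT assms(3) .
  obtain v where v: "v \<in> verts T" "A = clus X T v \<inter> K" using half_rc[OF assms(1-5)] by blast
  have KX: "K \<subseteq> X" using af_sub assms(1,2) by blast
  have AX: "A \<subseteq> X" using KX assms(4) by blast
  have "A \<subseteq> clus X T v" using v(2) by blast
  then have vA: "(v, lca X T A) \<in> (arcs T)\<^sup>*" using p.lca_low[OF AX assms(5) v(1)] by blast
  show ?thesis
  proof (rule ccontr)
    assume "span X T A \<inter> span X T (K - A) \<noteq> {}"
    then obtain z where z: "z \<in> span X T A" "z \<in> span X T (K - A)" by blast
    have "(v, z) \<in> (arcs T)\<^sup>*" using z(1) vA unfolding span_def by (auto intro: rtrancl_trans)
    then have "clus X T z \<subseteq> clus X T v" using p.clus_mono by blast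
    moreover have "clus X T z \<inter> (K - A) \<noteq> {}" using z(2) unfolding span_def by blast
    ultimately show False using v(2) by blast
  qed
qed

lemma half_arc: assumes "agreement_forest X Ts P" "K \<in> P" "T \<in> set Ts"
  "A = {x \<in> K. (c, lbl T1 x) \<in> (arcs T1)\<^sup>*}" "A \<noteq> {}" "K - A \<noteq> {}"
  shows "(lca X T A, lca X T (K - A)) \<notin> (arcs T)\<^sup>*"
proof
  assume h: "(lca X T A, lca X T (K - A)) \<in> (arcs T)\<^sup>*"
  interpret p: phy X T using phyT assms(3) .
  obtain v where v: "v \<in> verts T" "A = clus X T v \<inter> K" using half_rc[OF assms(1-5)] by blast
  have KX: "K \<subseteq> X" using af_sub assms(1,2) by blast
  have AX: "A \<subseteq> X" using KX assms(4) by blast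
  have "A \<subseteq> clus X T v" using v(2) by blast
  then have vA: "(v, lca X T A) \<in> (arcs T)\<^sup>*" using p.lca_low[OF AX assms(5) v(1)] by blast
  have "K - A \<subseteq> X" using KX by blast
  then have "K - A \<subseteq> clus X T (lca X T (K - A))" using p.lca_clus assms(6) by blast
  also have "\<dots> \<subseteq> clus X T v" using p.clus_mono vA h by (meson rtrancl_trans)
  finally show False using v(2) assms(6) by blast
qed

lemma arc_lift: assumes "agreement_forest X Ts P" "K1 \<in> P" "K2 \<in> P" "K1 \<noteq> K2"
  "b \<subseteq> K1" "d \<subseteq> K2" "b \<noteq> {}" "d \<noteq> {}" "T \<in> set Ts"
  "(lca X T b, lca X T d) \<in> (arcs T)\<^sup>*"
  shows "(lca X T K1, lca X T K2) \<in> (arcs T)\<^sup>*"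
proof -
  interpret p: phy X T using phyT assms(9) .
  have KX: "K1 \<subseteq> X" "K2 \<subseteq> X" using af_sub assms(1,2,3) by blast+
  have "(lca X T K1, lca X T b) \<in> (arcs T)\<^sup>*" using p.lca_mono assms KX by blast
  then have a1: "(lca X T K1, lca X T d) \<in> (arcs T)\<^sup>*" using assms(10) by simp
  have a2: "(lca X T K2, lca X T d) \<in> (arcs T)\<^sup>*" using p.lca_mono assms KX by blast
  from p.chain[OF a1 a2] show ?thesis
  proof
    assume h: "(lca X T K2, lca X T K1) \<in> (arcs T)\<^sup>*"
    have "d \<subseteq> clus X T (lca X T d)" using p.lca_clus assms KX by (meson subset_trans)
    also have "\<dots> \<subseteq> clus X T (lca X T K1)" using p.clus_mono a1 by blast
    finally have "clus X T (lca X T K1) \<inter> K2 \<noteq> {}" using assms(6,8) by blast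
    moreover have "lca X T K1 \<in> verts T" using p.lca_in[OF KX(1) af_ne[OF assms(1,2)]] .
    ultimately have "lca X T K1 \<in> span X T K2" unfolding span_def using h by blast
    moreover have "lca X T K1 \<in> span X T K1" using p.lca_in_span[OF KX(1) af_ne[OF assms(1,2)]] .
    ultimately have False using af_span assms(1-4,9) by blast
    then show ?thesis ..
  qed
qed

end


context phy begin
lemma part_union: "\<Union>(part W) = X" unfolding part_def using sf_refl by blast
lemma part_disj: "K \<in> part W \<Longrightarrow> K' \<in> part W \<Longrightarrow> K \<noteq> K' \<Longrightarrow> K \<inter> K' = {}"
  using part_mem by blast
lemma sf_insert: "sf (insert c W) x y \<longleftrightarrow> sf W x y \<and> ((c, lbl T x) \<in> (arcs T)\<^sup>* \<longleftrightarrow> (c, lbl T y) \<in> (arcs T)\<^sup>*)"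
  unfolding sf_def by blast
end

lemma two_halves: assumes "K1 = {x \<in> Q. C x \<longleftrightarrow> p1}" "K2 = {x \<in> Q. C x \<longleftrightarrow> p2}" "K1 \<noteq> K2"
  shows "(K1 = {x \<in> Q. C x} \<and> K2 = Q - K1) \<or> (K2 = {x \<in> Q. C x} \<and> K1 = Q - K2)"
  using assms by (cases p1; cases p2) auto

context multi begin

definition par :: "'v set \<Rightarrow> 'x set \<Rightarrow> 'x set" where
  "par W K' = {x \<in> X. t1.sf W x (SOME y. y \<in> K')}"

lemma par_props: assumes "K' \<in> t1.part (insert c W)"
  shows "par W K' \<in> t1.part W"
    "K' = {x \<in> par W K'. (c, lbl T1 x) \<in> (arcs T1)\<^sup>* \<longleftrightarrow> (c, lbl T1 (SOME y. y \<in> K')) \<in> (arcs T1)\<^sup>*}"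
    "K' \<subseteq> par W K'"
proof -
  have "K' \<noteq> {}" using t1.part_ne assms by blast
  then have y: "(SOME y. y \<in> K') \<in> K'" by (simp add: some_in_eq)
  have KX: "K' \<subseteq> X" using t1.part_sub assms by blast
  show "par W K' \<in> t1.part W" unfolding par_def using t1.part_in y KX by blast
  have "K' = {z \<in> X. t1.sf (insert c W) z (SOME y. y \<in> K')}" using t1.part_mem[OF assms y] .
  then show "K' = {x \<in> par W K'. (c, lbl T1 x) \<in> (arcs T1)\<^sup>* \<longleftrightarrow> (c, lbl T1 (SOME y. y \<in> K')) \<in> (arcs T1)\<^sup>*}"
    unfolding par_def t1.sf_insert by blast
  then show "K' \<subseteq> par W K'" by blast
qed

lemma halves: assumes "K1 \<in> t1.part (insert c W)" "K2 \<in> t1.part (insert c W)" "K1 \<noteq> K2"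
  "par W K1 = par W K2"
  shows "(K1 = {x \<in> par W K1. (c, lbl T1 x) \<in> (arcs T1)\<^sup>*} \<and> K2 = par W K1 - K1) \<or>
         (K2 = {x \<in> par W K1. (c, lbl T1 x) \<in> (arcs T1)\<^sup>*} \<and> K1 = par W K1 - K2)"
proof -
  let ?y1 = "SOME y. y \<in> K1" and ?y2 = "SOME y. y \<in> K2"
  have e1: "K1 = {x \<in> par W K1. (c, lbl T1 x) \<in> (arcs T1)\<^sup>* \<longleftrightarrow> (c, lbl T1 ?y1) \<in> (arcs T1)\<^sup>*}"
    using par_props(2)[OF assms(1)] .
  have e2: "K2 = {x \<in> par W K1. (c, lbl T1 x) \<in> (arcs T1)\<^sup>* \<longleftrightarrow> (c, lbl T1 ?y2) \<in> (arcs T1)\<^sup>*}"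
    using par_props(2)[OF assms(2)] assms(4) by simp
  show ?thesis using two_halves[OF e1 e2 assms(3)] .
qed

theorem refine: assumes "acyclic_af X Ts (t1.part W)"
  shows "acyclic_af X Ts (t1.part (insert c W))"
proof -
  let ?P = "t1.part W" and ?Q = "t1.part (insert c W)"
  have afP: "agreement_forest X Ts ?P" and acP: "acyclic (GF X Ts ?P)"
    using assms unfolding acyclic_af_def by blast+
  let ?A = "\<lambda>K. {x \<in> K. (c, lbl T1 x) \<in> (arcs T1)\<^sup>*}"
  have spanQ: "span X T K1 \<inter> span X T K2 = {}"
    if "T \<in> set Ts" "K1 \<in> ?Q" "K2 \<in> ?Q" "K1 \<noteq> K2" for T K1 K2
  proof -
    interpret p: phy X T using phyT that(1) .
    have pp: "par W K1 \<in> ?P" "K1 \<subseteq> par W K1" "par W K2 \<in> ?P" "K2 \<subseteq> par W K2"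
      using par_props that by blast+
    have ne: "K1 \<noteq> {}" "K2 \<noteq> {}" using t1.part_ne that by blast+
    have sx: "par W K1 \<subseteq> X" "par W K2 \<subseteq> X" using t1.part_sub pp by blast+
    show ?thesis
    proof (cases "par W K1 = par W K2")
      case False
      have "span X T K1 \<subseteq> span X T (par W K1)" using p.span_mono pp sx ne by blast
      moreover have "span X T K2 \<subseteq> span X T (par W K2)" using p.span_mono pp sx ne by blast
      moreover have "span X T (par W K1) \<inter> span X T (par W K2) = {}"
        using af_span[OF afP that(1) pp(1) pp(3) False] .
      ultimately show ?thesis by blast
    next
      case True
      from halves[OF that(2-4) True] show ?thesis
      proof
        assume h: "K1 = ?A (par W K1) \<and> K2 = par W K1 - K1"
        have "par W K1 - K1 \<noteq> {}" using h ne by simp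
        from half_span[OF afP pp(1) that(1) conjunct1[OF h] ne(1) this]
        show ?thesis using h by simp
      next
        assume h: "K2 = ?A (par W K1) \<and> K1 = par W K1 - K2"
        have "par W K1 - K2 \<noteq> {}" by (metis conjunct2[OF h] ne(1))
        then have "par W K1 - ?A (par W K1) \<noteq> {}" "?A (par W K1) \<noteq> {}" using h ne by metis+
        from half_span[OF afP pp(1) that(1) refl this(2) this(1)]
        show ?thesis using h by (metis Int_commute)
      qed
    qed
  qed
  have afQ: "agreement_forest X Ts ?Q"
  proof (rule af_intro)
    show "\<forall>B\<in>?Q. B \<noteq> {}" using t1.part_ne by blast
    show "\<Union>?Q = X" using t1.part_union by blast
    show "\<forall>B\<in>?Q. \<forall>B'\<in>?Q. B \<noteq> B' \<longrightarrow> B \<inter> B' = {}" using t1.part_disj by blast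
    show "\<forall>T\<in>set Ts. \<forall>B\<in>?Q. restr_clusters X T B = restr_clusters X T1 B"
    proof (intro ballI)
      fix T B assume "T \<in> set Ts" "B \<in> ?Q"
      then have "restr_clusters X T (par W B) = restr_clusters X T1 (par W B)" "B \<subseteq> par W B"
        using af_rc[OF afP] par_props by blast+
      then show "restr_clusters X T B = restr_clusters X T1 B"
        using rc_sub[of B "par W B" X T] rc_sub[of B "par W B" X T1] by simp
    qed
    show "\<forall>T\<in>set Ts. \<forall>B\<in>?Q. \<forall>B'\<in>?Q. B \<noteq> B' \<longrightarrow> span X T B \<inter> span X T B' = {}"
      using spanQ by blast
  qed
  define C where "C = {x. (c, lbl T1 x) \<in> (arcs T1)\<^sup>*}"
  have arcQ: "(par W a, par W b) \<in> GF X Ts ?P \<or> (par W a = par W b \<and> a \<inter> C = {} \<and> b \<subseteq> C)"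
    if "(a,b) \<in> GF X Ts ?Q" for a b
  proof -
    have ab: "a \<in> ?Q" "b \<in> ?Q" "a \<noteq> b" and "\<exists>T\<in>set Ts. (lca X T a, lca X T b) \<in> (arcs T)\<^sup>*"
      using that unfolding GF_def gf_arc_def by blast+
    then obtain T where T: "T \<in> set Ts" "(lca X T a, lca X T b) \<in> (arcs T)\<^sup>*" by blast
    have pp: "par W a \<in> ?P" "a \<subseteq> par W a" "par W b \<in> ?P" "b \<subseteq> par W b"
      using par_props ab by blast+
    have ne: "a \<noteq> {}" "b \<noteq> {}" using t1.part_ne ab by blast+
    show ?thesis
    proof (cases "par W a = par W b")
      case False
      have "(lca X T (par W a), lca X T (par W b)) \<in> (arcs T)\<^sup>*"
        using arc_lift[OF afP pp(1) pp(3) False pp(2) pp(4) ne T] .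
      then have "(par W a, par W b) \<in> GF X Ts ?P" unfolding GF_def gf_arc_def using pp False T(1) by blast
      then show ?thesis by blast
    next
      case True
      from halves[OF ab True] show ?thesis
      proof
        assume h: "a = ?A (par W a) \<and> b = par W a - a"
        have "par W a - a \<noteq> {}" using h ne by simp
        from half_arc[OF afP pp(1) T(1) conjunct1[OF h] ne(1) this]
        have "(lca X T a, lca X T b) \<notin> (arcs T)\<^sup>*" using h by simp
        then show ?thesis using T by blast
      next
        assume h: "b = ?A (par W a) \<and> a = par W a - b"
        then have "a \<inter> C = {}" "b \<subseteq> C" unfolding C_def by blast+
        then show ?thesis using True by blast
      qed
    qed
  qed
  have tr: "(par W a, par W b) \<in> (GF X Ts ?P)\<^sup>+ \<or> (par W a = par W b \<and> a \<inter> C = {} \<and> b \<subseteq> C)"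
    if "(a,b) \<in> (GF X Ts ?Q)\<^sup>+" for a b
    using that
  proof (induction rule: trancl_induct)
    case (base y) then show ?case using arcQ by blast
  next
    case (step y z)
    have yne: "y \<noteq> {}" using step.hyps(2) t1.part_ne unfolding GF_def by blast
    from arcQ[OF step.hyps(2)] step.IH show ?case using yne by (auto intro: trancl_into_trancl)
  qed
  have "acyclic (GF X Ts ?Q)"
    unfolding acyclic_def
  proof (intro allI notI)
    fix a assume h: "(a,a) \<in> (GF X Ts ?Q)\<^sup>+"
    then have "a \<in> ?Q" unfolding GF_def by (metis (no_types, lifting) case_prodD mem_Collect_eq tranclE)
    then have "a \<noteq> {}" using t1.part_ne by blast
    then show False using tr[OF h] acP unfolding acyclic_def by blast
  qed
  then show ?thesis using afQ unfolding acyclic_af_def by blast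
qed

end


context phy begin

lemma below_child: assumes "children T r = {c,d}" "c \<noteq> d"
  "(r,w) \<in> (arcs T)\<^sup>+" "(w, z) \<in> (arcs T)\<^sup>*" "(c, z) \<in> (arcs T)\<^sup>*"
  shows "(c, w) \<in> (arcs T)\<^sup>*"
proof -
  obtain c' where c': "c' \<in> children T r" "(c',w) \<in> (arcs T)\<^sup>*" using child_below[OF assms(3)] by blast
  show ?thesis
  proof (cases "c' = c")
    case True then show ?thesis using c' by simp
  next
    case False
    then have "c' = d" using c' assms(1) by blast
    have "(c', z) \<in> (arcs T)\<^sup>*" using c'(2) assms(4) by simp
    then show ?thesis using siblings[of c r d z] assms(1,2,5) \<open>c' = d\<close> by blast
  qed
qed

lemma exch:
  assumes ch: "children T r = {c,d}" "c \<noteq> d"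
    and WD: "WD \<subseteq> Wst" and cW: "c \<notin> Wst"
    and B: "B \<in> part WD"
    and x0: "x0 \<in> B" "(c, lbl T x0) \<in> (arcs T)\<^sup>*"
    and y0: "y0 \<in> B" "(d, lbl T y0) \<in> (arcs T)\<^sup>*"
    and dead: "\<forall>x\<in>B. (c, lbl T x) \<in> (arcs T)\<^sup>* \<longrightarrow> (\<exists>w\<in>Wst. (r,w) \<in> (arcs T)\<^sup>+ \<and> (w, lbl T x) \<in> (arcs T)\<^sup>*)"
  shows "\<exists>w0 \<in> Wst - WD. \<forall>p\<in>X. \<forall>q\<in>X. sf (insert c (Wst - {w0})) p q \<longleftrightarrow> sf Wst p q"
proof -
  have BX: "B \<subseteq> X" using part_sub B by blast
  have Bmem: "B = {z \<in> X. sf WD z x0}" using part_mem[OF B x0(1)] .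
  have sxy: "sf WD x0 y0" using part_same B x0(1) y0(1) by blast
  define Q where "Q = {w \<in> Wst. (r,w) \<in> (arcs T)\<^sup>+ \<and> (w, lbl T x0) \<in> (arcs T)\<^sup>*}"
  have "Q \<noteq> {}" using dead x0 unfolding Q_def by blast
  then obtain w0 where w0Q: "w0 \<in> Q" and hi: "\<forall>y. (y,w0) \<in> (arcs T)\<^sup>+ \<longrightarrow> y \<notin> Q"
    using highest_ex by blast
  have w0: "w0 \<in> Wst" "(r,w0) \<in> (arcs T)\<^sup>+" "(w0, lbl T x0) \<in> (arcs T)\<^sup>*" using w0Q Q_def by auto
  have F1: "(c, w0) \<in> (arcs T)\<^sup>*" using below_child[OF ch w0(2,3) x0(2)] .
  have F2: "(w0, lbl T y0) \<notin> (arcs T)\<^sup>*"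
  proof
    assume "(w0, lbl T y0) \<in> (arcs T)\<^sup>*"
    then have "(c, lbl T y0) \<in> (arcs T)\<^sup>*" using F1 by simp
    then show False using siblings[of c r d "lbl T y0"] ch y0(2) by blast
  qed
  have F3: "w0 \<notin> WD" using sxy w0(3) F2 unfolding sf_def by blast
  define W' where "W' = insert c (Wst - {w0})"
  have WDW': "WD \<subseteq> W'" using WD F3 unfolding W'_def by blast
  have G: "(c, w) \<in> (arcs T)\<^sup>*" if "(r,w) \<in> (arcs T)\<^sup>+" "(w, lbl T z) \<in> (arcs T)\<^sup>*" "(c, lbl T z) \<in> (arcs T)\<^sup>*" for w z
    using below_child[OF ch that] .
  have sepw0: "\<not> sf W' p q" if p: "p \<in> X" "q \<in> X" "(w0, lbl T p) \<in> (arcs T)\<^sup>*" "(w0, lbl T q) \<notin> (arcs T)\<^sup>*" for p q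
  proof
    assume s: "sf W' p q"
    have cp: "(c, lbl T p) \<in> (arcs T)\<^sup>*" using F1 p(3) by simp
    have cq: "(c, lbl T q) \<in> (arcs T)\<^sup>*" using s cp unfolding sf_def W'_def by blast
    have sDpq: "sf WD p q" using sf_mono[OF WDW' s] .
    have S1: "sf WD x0 p" unfolding sf_def
    proof
      fix w assume wD: "w \<in> WD"
      show "(w, lbl T x0) \<in> (arcs T)\<^sup>* \<longleftrightarrow> (w, lbl T p) \<in> (arcs T)\<^sup>*"
      proof
        assume a: "(w, lbl T x0) \<in> (arcs T)\<^sup>*"
        from chain[OF a w0(3)] show "(w, lbl T p) \<in> (arcs T)\<^sup>*"
        proof
          assume "(w, w0) \<in> (arcs T)\<^sup>*" then show ?thesis using p(3) by simp
        next
          assume h: "(w0, w) \<in> (arcs T)\<^sup>*"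
          have "(w, lbl T y0) \<in> (arcs T)\<^sup>*" using sxy wD a unfolding sf_def by blast
          then have False using h F2 by (meson rtrancl_trans)
          then show ?thesis ..
        qed
      next
        assume a: "(w, lbl T p) \<in> (arcs T)\<^sup>*"
        from chain[OF a p(3)] show "(w, lbl T x0) \<in> (arcs T)\<^sup>*"
        proof
          assume "(w, w0) \<in> (arcs T)\<^sup>*" then show ?thesis using w0(3) by simp
        next
          assume h: "(w0, w) \<in> (arcs T)\<^sup>*"
          have "(w, lbl T q) \<in> (arcs T)\<^sup>*" using sDpq wD a unfolding sf_def by blast
          then have False using h p(4) by (meson rtrancl_trans)
          then show ?thesis ..
        qed
      qed
    qed
    have "sf WD q x0" using sf_trans[OF sf_sym[OF sDpq] sf_sym[OF S1]] .
    then have qB: "q \<in> B" using Bmem p(2) by blast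
    then obtain wq where wq: "wq \<in> Wst" "(r,wq) \<in> (arcs T)\<^sup>+" "(wq, lbl T q) \<in> (arcs T)\<^sup>*"
      using dead cq by blast
    have "wq \<noteq> w0" using wq(3) p(4) by blast
    then have "wq \<in> W'" using wq(1) unfolding W'_def by blast
    then have wqp: "(wq, lbl T p) \<in> (arcs T)\<^sup>*" using s wq(3) unfolding sf_def by blast
    from chain[OF wqp p(3)] show False
    proof
      assume h: "(wq, w0) \<in> (arcs T)\<^sup>*"
      then have "(wq, w0) \<in> (arcs T)\<^sup>+" using \<open>wq \<noteq> w0\<close> by (metis rtrancl_eq_or_trancl)
      moreover have "(wq, lbl T x0) \<in> (arcs T)\<^sup>*" using h w0(3) by (rule rtrancl_trans)
      then have "wq \<in> Q" unfolding Q_def using wq(1,2) by blast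
      ultimately show False using hi by blast
    next
      assume "(w0, wq) \<in> (arcs T)\<^sup>*"
      then show False using wq(3) p(4) by (meson rtrancl_trans)
    qed
  qed
  have sepc: "\<not> sf Wst p q" if p: "p \<in> X" "q \<in> X" "(c, lbl T p) \<in> (arcs T)\<^sup>*" "(c, lbl T q) \<notin> (arcs T)\<^sup>*" for p q
  proof
    assume s: "sf Wst p q"
    have sDpq: "sf WD p q" using sf_mono[OF WD s] .
    have S2: "sf WD x0 p" unfolding sf_def
    proof
      fix w assume wD: "w \<in> WD"
      show "(w, lbl T x0) \<in> (arcs T)\<^sup>* \<longleftrightarrow> (w, lbl T p) \<in> (arcs T)\<^sup>*"
      proof
        assume a: "(w, lbl T x0) \<in> (arcs T)\<^sup>*"
        from chain[OF a x0(2)] show "(w, lbl T p) \<in> (arcs T)\<^sup>*"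
        proof
          assume "(w, c) \<in> (arcs T)\<^sup>*" then show ?thesis using p(3) by simp
        next
          assume h: "(c, w) \<in> (arcs T)\<^sup>*"
          have "(w, lbl T y0) \<in> (arcs T)\<^sup>*" using sxy wD a unfolding sf_def by blast
          then have "(c, lbl T y0) \<in> (arcs T)\<^sup>*" using h by simp
          then have False using siblings[of c r d "lbl T y0"] ch y0(2) by blast
          then show ?thesis ..
        qed
      next
        assume a: "(w, lbl T p) \<in> (arcs T)\<^sup>*"
        from chain[OF a p(3)] show "(w, lbl T x0) \<in> (arcs T)\<^sup>*"
        proof
          assume "(w, c) \<in> (arcs T)\<^sup>*" then show ?thesis using x0(2) by simp
        next
          assume h: "(c, w) \<in> (arcs T)\<^sup>*"
          have "(w, lbl T q) \<in> (arcs T)\<^sup>*" using sDpq wD a unfolding sf_def by blast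
          then have False using h p(4) by (meson rtrancl_trans)
          then show ?thesis ..
        qed
      qed
    qed
    have "p \<in> B" using Bmem p(1) sf_sym[OF S2] by blast
    then obtain wp where wp: "wp \<in> Wst" "(r,wp) \<in> (arcs T)\<^sup>+" "(wp, lbl T p) \<in> (arcs T)\<^sup>*"
      using dead p(3) by blast
    have "(c, wp) \<in> (arcs T)\<^sup>*" using G[OF wp(2,3) p(3)] .
    moreover have "(wp, lbl T q) \<in> (arcs T)\<^sup>*" using s wp unfolding sf_def by blast
    ultimately show False using p(4) by (meson rtrancl_trans)
  qed
  have "sf W' p q \<longleftrightarrow> sf Wst p q" if "p \<in> X" "q \<in> X" for p q
  proof
    assume s: "sf W' p q"
    show "sf Wst p q" unfolding sf_def
    proof
      fix w assume wW: "w \<in> Wst"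
      show "(w, lbl T p) \<in> (arcs T)\<^sup>* \<longleftrightarrow> (w, lbl T q) \<in> (arcs T)\<^sup>*"
      proof (cases "w = w0")
        case False
        then have "w \<in> W'" using wW unfolding W'_def by blast
        then show ?thesis using s unfolding sf_def by blast
      next
        case True
        show ?thesis using sepw0[of p q] sepw0[of q p] s sf_sym that True by blast
      qed
    qed
  next
    assume s: "sf Wst p q"
    show "sf W' p q" unfolding sf_def
    proof
      fix w assume wW: "w \<in> W'"
      show "(w, lbl T p) \<in> (arcs T)\<^sup>* \<longleftrightarrow> (w, lbl T q) \<in> (arcs T)\<^sup>*"
      proof (cases "w = c")
        case False
        then have "w \<in> Wst" using wW unfolding W'_def by blast
        then show ?thesis using s unfolding sf_def by blast
      next
        case True
        show ?thesis using sepc[of p q] sepc[of q p] s sf_sym that True by blast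
      qed
    qed
  qed
  then show ?thesis using w0(1) F3 unfolding W'_def by blast
qed

lemma dead_side:
  assumes ch: "children T r = {c,d}" "c \<noteq> d"
    and Br: "\<forall>x\<in>B. (r, lbl T x) \<in> (arcs T)\<^sup>*"
    and notalive: "\<forall>x\<in>B. \<forall>y\<in>B. (c, lbl T x) \<in> (arcs T)\<^sup>* \<longrightarrow> (d, lbl T y) \<in> (arcs T)\<^sup>* \<longrightarrow> \<not> sf Wst x y"
  shows "(\<forall>x\<in>B. (c, lbl T x) \<in> (arcs T)\<^sup>* \<longrightarrow> (\<exists>w\<in>Wst. (r,w) \<in> (arcs T)\<^sup>+ \<and> (w, lbl T x) \<in> (arcs T)\<^sup>*)) \<or>
         (\<forall>x\<in>B. (d, lbl T x) \<in> (arcs T)\<^sup>* \<longrightarrow> (\<exists>w\<in>Wst. (r,w) \<in> (arcs T)\<^sup>+ \<and> (w, lbl T x) \<in> (arcs T)\<^sup>*))"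
proof (rule ccontr)
  assume "\<not> ?thesis"
  then obtain x y where x: "x \<in> B" "(c, lbl T x) \<in> (arcs T)\<^sup>*" "\<forall>w\<in>Wst. (r,w) \<in> (arcs T)\<^sup>+ \<longrightarrow> (w, lbl T x) \<notin> (arcs T)\<^sup>*"
    and y: "y \<in> B" "(d, lbl T y) \<in> (arcs T)\<^sup>*" "\<forall>w\<in>Wst. (r,w) \<in> (arcs T)\<^sup>+ \<longrightarrow> (w, lbl T y) \<notin> (arcs T)\<^sup>*"
    by blast
  have rx: "(r, lbl T x) \<in> (arcs T)\<^sup>*" "(r, lbl T y) \<in> (arcs T)\<^sup>*" using Br x y by blast+
  have "sf Wst x y" unfolding sf_def
  proof
    fix w assume wW: "w \<in> Wst"
    have up: "(w, r) \<in> (arcs T)\<^sup>*" if "(w, lbl T z) \<in> (arcs T)\<^sup>*" "(r, lbl T z) \<in> (arcs T)\<^sup>*"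
      "\<forall>w\<in>Wst. (r,w) \<in> (arcs T)\<^sup>+ \<longrightarrow> (w, lbl T z) \<notin> (arcs T)\<^sup>*" for z
    proof -
      from chain[OF that(1,2)] show ?thesis
      proof
        assume "(r, w) \<in> (arcs T)\<^sup>*"
        then have "r = w \<or> (r,w) \<in> (arcs T)\<^sup>+" by (metis rtrancl_eq_or_trancl)
        then show ?thesis using that(1,3) wW by auto
      qed
    qed
    show "(w, lbl T x) \<in> (arcs T)\<^sup>* \<longleftrightarrow> (w, lbl T y) \<in> (arcs T)\<^sup>*"
      using up[of x] up[of y] rx x(3) y(3) by (meson rtrancl_trans)
  qed
  then show False using notalive x y by blast
qed

end


context multi begin

lemma lca_keep:
  assumes afP: "agreement_forest X Ts P" and B: "B \<in> P"
    and ch: "children T1 (lca X T1 B) = {c,d}" "c \<noteq> d"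
    and B0: "B0 \<subseteq> B" "x \<in> B0" "(c, lbl T1 x) \<in> (arcs T1)\<^sup>*" "y \<in> B0" "(d, lbl T1 y) \<in> (arcs T1)\<^sup>*"
    and T: "T \<in> set Ts"
  shows "lca X T B0 = lca X T B"
proof (rule ccontr)
  assume ne: "lca X T B0 \<noteq> lca X T B"
  interpret p: phy X T using phyT T .
  let ?u = "lca X T B0" and ?v = "lca X T B" and ?r = "lca X T1 B"
  have BX: "B \<subseteq> X" using af_sub afP B by blast
  have Bne: "B \<noteq> {}" "B0 \<noteq> {}" using B0 by blast+
  have B0X: "B0 \<subseteq> X" using BX B0 by blast
  have vu: "(?v, ?u) \<in> (arcs T)\<^sup>*" using p.lca_mono[OF B0(1) BX Bne(2)] .
  have uv: "u \<in> verts T" if "u = ?u" for u using p.lca_in[OF B0X Bne(2)] that by simp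
  have B0u: "B0 \<subseteq> clus X T ?u" using p.lca_clus[OF B0X Bne(2)] .
  have "clus X T ?u \<inter> B \<in> restr_clusters X T B"
    unfolding restr_clusters_def using uv B0u B0 by blast
  then have "clus X T ?u \<inter> B \<in> restr_clusters X T1 B" using af_rc[OF afP T B] by simp
  then obtain z where z: "z \<in> verts T1" "clus X T ?u \<inter> B = clus X T1 z \<inter> B"
    unfolding restr_clusters_def by blast
  have xz: "x \<in> clus X T1 z" "y \<in> clus X T1 z" using z(2) B0u B0 by blast+
  then have zx: "(z, lbl T1 x) \<in> (arcs T1)\<^sup>*" "(z, lbl T1 y) \<in> (arcs T1)\<^sup>*" unfolding clus_def by auto
  have rx: "(?r, lbl T1 x) \<in> (arcs T1)\<^sup>*" using t1.lca_clus[OF BX Bne(1)] B0 unfolding clus_def by blast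
  have case1: False if zr: "(z, ?r) \<in> (arcs T1)\<^sup>*"
  proof -
    have "B \<subseteq> clus X T1 ?r" using t1.lca_clus[OF BX Bne(1)] .
    also have "\<dots> \<subseteq> clus X T1 z" using t1.clus_mono[OF zr] .
    finally have "B \<subseteq> clus X T ?u" using z(2) by blast
    then have "(?u, ?v) \<in> (arcs T)\<^sup>*" using p.lca_low[OF BX Bne(1) uv] by blast
    then show False using p.antisym_rt vu ne by blast
  qed
  from t1.chain[OF zx(1) rx] show False
  proof
    assume "(?r, z) \<in> (arcs T1)\<^sup>*"
    then have "?r = z \<or> (?r, z) \<in> (arcs T1)\<^sup>+" by (metis rtrancl_eq_or_trancl)
    then show False
    proof
      assume "?r = z" then show False using case1 by simp
    next
      assume "(?r, z) \<in> (arcs T1)\<^sup>+"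
      then obtain c' where c': "c' \<in> children T1 ?r" "(c', z) \<in> (arcs T1)\<^sup>*" using t1.child_below by blast
      have "(c', lbl T1 x) \<in> (arcs T1)\<^sup>*" "(c', lbl T1 y) \<in> (arcs T1)\<^sup>*" using c'(2) zx by simp_all
      moreover have cd: "c \<in> children T1 ?r" "d \<in> children T1 ?r" using ch by auto
      moreover have "c' = c \<or> c' = d" using c'(1) ch by blast
      ultimately show False
      proof (elim disjE)
        assume "c' = c" then show False
          using t1.siblings[OF cd ch(2), of "lbl T1 y"] B0(5) \<open>(c', lbl T1 y) \<in> _\<close> by blast
      next
        assume "c' = d" then show False
          using t1.siblings[OF cd ch(2), of "lbl T1 x"] B0(3) \<open>(c', lbl T1 x) \<in> _\<close> by blast
      qed
    qed
  next
    assume "(z, ?r) \<in> (arcs T1)\<^sup>*" then show False using case1 by blast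
  qed
qed

lemma children_two:
  assumes afP: "agreement_forest X Ts P" and B: "B \<in> P" "B' \<in> P" and g: "gf_arc X Ts B B'"
  shows "\<exists>c d. children T1 (lca X T1 B) = {c,d} \<and> c \<noteq> d"
proof -
  let ?r = "lca X T1 B"
  have BX: "B \<subseteq> X" "B' \<subseteq> X" using af_sub afP B by blast+
  have Bne: "B \<noteq> {}" "B' \<noteq> {}" using af_ne afP B by blast+
  have rv: "?r \<in> verts T1" using t1.lca_in[OF BX(1) Bne(1)] .
  have "children T1 ?r \<noteq> {}"
  proof
    assume nc: "children T1 ?r = {}"
    obtain x0 where x0: "x0 \<in> B" using Bne by blast
    have lr: "lbl T1 x = ?r" if "x \<in> B" for x
    proof -
      have "(?r, lbl T1 x) \<in> (arcs T1)\<^sup>*" using t1.lca_clus[OF BX(1) Bne(1)] that unfolding clus_def by blast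
      then show ?thesis using nc unfolding children_def by (metis converse_rtranclE empty_iff mem_Collect_eq)
    qed
    have "x = x0" if "x \<in> B" for x
    proof -
      have "lbl T1 x = lbl T1 x0" using lr[OF that] lr[OF x0] by simp
      moreover have "x \<in> X" "x0 \<in> X" using that x0 BX by blast+
      ultimately show ?thesis using t1.lbl_inj by blast
    qed
    then have Bs: "B = {x0}" using x0 by blast
    obtain T where T: "T \<in> set Ts" "(lca X T B, lca X T B') \<in> (arcs T)\<^sup>*" and BB: "B \<noteq> B'"
      using g unfolding gf_arc_def by blast
    interpret p: phy X T using phyT T(1) .
    have x0X: "x0 \<in> X" using x0 BX by blast
    have "lca X T B = lbl T x0" using p.lca_single[OF x0X] Bs by simp
    then have eq: "lca X T B' = lbl T x0" using p.leaf_down[OF x0X] T(2) by simp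
    have "B' \<subseteq> {x0}"
    proof
      fix z assume "z \<in> B'"
      then have "(lbl T x0, lbl T z) \<in> (arcs T)\<^sup>*" using p.lca_clus[OF BX(2) Bne(2)] eq unfolding clus_def by auto
      then show "z \<in> {x0}" using p.leaf_anc x0X BX(2) \<open>z \<in> B'\<close> by blast
    qed
    then have "B' \<subseteq> B" using Bs by simp
    then show False using af_disj[OF afP B BB] Bne(2) by blast
  qed
  moreover obtain \<rho> where rt: "is_root T1 \<rho>" "card (children T1 \<rho>) = 2"
    "\<forall>v\<in>verts T1 - {\<rho>}. card (parents T1 v) = 1 \<and> (children T1 v = {} \<or> card (children T1 v) = 2)"
    by (rule t1.root_ex)
  ultimately have "card (children T1 ?r) = 2" using rv by (cases "?r = \<rho>") auto
  then show ?thesis by (simp add: card_2_iff)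
qed

lemma sides:
  assumes afP: "agreement_forest X Ts (t1.part WD)" and B: "B \<in> t1.part WD"
    and ch: "children T1 (lca X T1 B) = {c,d}" "c \<noteq> d"
  shows "\<exists>x\<in>B. (c, lbl T1 x) \<in> (arcs T1)\<^sup>*" "\<exists>y\<in>B. (d, lbl T1 y) \<in> (arcs T1)\<^sup>*"
    "c \<notin> WD" "d \<notin> WD" "\<forall>x\<in>B. (lca X T1 B, lbl T1 x) \<in> (arcs T1)\<^sup>*"
proof -
  let ?r = "lca X T1 B"
  have BX: "B \<subseteq> X" using t1.part_sub B by blast
  have Bne: "B \<noteq> {}" using t1.part_ne B by blast
  show Br: "\<forall>x\<in>B. (?r, lbl T1 x) \<in> (arcs T1)\<^sup>*" using t1.lca_clus[OF BX Bne] unfolding clus_def by blast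
  have side: "\<exists>x\<in>B. (a, lbl T1 x) \<in> (arcs T1)\<^sup>*" if ab: "children T1 ?r = {a,b}" "a \<noteq> b" for a b
  proof (rule ccontr)
    assume na: "\<not> ?thesis"
    have "x \<in> clus X T1 b" if "x \<in> B" for x
    proof -
      have xl: "lbl T1 x \<in> verts T1 \<and> children T1 (lbl T1 x) = {}" using t1.lbl_leaf that BX by blast
      have "?r \<noteq> lbl T1 x" using ab xl by auto
      then have "(?r, lbl T1 x) \<in> (arcs T1)\<^sup>+" using Br that by (metis rtrancl_eq_or_trancl)
      then obtain c' where "c' \<in> children T1 ?r" "(c', lbl T1 x) \<in> (arcs T1)\<^sup>*" using t1.child_below by blast
      moreover have "c' = a \<or> c' = b" using calculation(1) ab by blast
      ultimately have "c' = b" using na that by blast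
      then show ?thesis using \<open>(c', lbl T1 x) \<in> _\<close> that BX unfolding clus_def by blast
    qed
    then have "B \<subseteq> clus X T1 b" by blast
    moreover have "(?r, b) \<in> arcs T1" using ab unfolding children_def by blast
    moreover have "b \<in> verts T1" using t1.arc_verts calculation(2) by blast
    ultimately have "(b, ?r) \<in> (arcs T1)\<^sup>*" using t1.lca_low[OF BX Bne] by blast
    then show False using t1.not_trancl_back \<open>(?r, b) \<in> arcs T1\<close> by blast
  qed
  show sc: "\<exists>x\<in>B. (c, lbl T1 x) \<in> (arcs T1)\<^sup>*" using side ch by blast
  show sd: "\<exists>y\<in>B. (d, lbl T1 y) \<in> (arcs T1)\<^sup>*" using side[of d c] ch by (simp add: insert_commute)
  obtain x y where xy: "x \<in> B" "(c, lbl T1 x) \<in> (arcs T1)\<^sup>*" "y \<in> B" "(d, lbl T1 y) \<in> (arcs T1)\<^sup>*"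
    using sc sd by blast
  have s: "t1.sf WD x y" using t1.part_same B xy by blast
  show "c \<notin> WD"
  proof
    assume "c \<in> WD"
    then have "(c, lbl T1 y) \<in> (arcs T1)\<^sup>*" using s xy unfolding t1.sf_def by blast
    then show False using t1.siblings[of c "?r" d] ch xy by blast
  qed
  show "d \<notin> WD"
  proof
    assume "d \<in> WD"
    then have "(d, lbl T1 x) \<in> (arcs T1)\<^sup>*" using s xy unfolding t1.sf_def by blast
    then show False using t1.siblings[of c "?r" d] ch xy by blast
  qed
qed

end


context multi begin

lemma finest_cls: assumes "x \<in> X" shows "{z \<in> X. t1.sf (snd ` arcs T1) z x} = {x}"
proof -
  obtain \<rho> where rt: "is_root T1 \<rho>" "card (children T1 \<rho>) = 2" by (rule t1.root_ex)
  have "z = x" if z: "z \<in> X" "t1.sf (snd ` arcs T1) z x" for z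
  proof -
    have zl: "lbl T1 z \<in> verts T1" "children T1 (lbl T1 z) = {}" using t1.lbl_leaf z(1) by blast+
    have "\<rho> \<noteq> lbl T1 z" using rt(2) zl(2) by auto
    moreover have "(\<rho>, lbl T1 z) \<in> (arcs T1)\<^sup>*" using t1.root_anc[OF rt(1) zl(1)] .
    ultimately obtain p where "(p, lbl T1 z) \<in> arcs T1" using t1.up_step by blast
    then have "lbl T1 z \<in> snd ` arcs T1" by force
    then have "(lbl T1 z, lbl T1 x) \<in> (arcs T1)\<^sup>*" using z(2) unfolding t1.sf_def by blast
    then show ?thesis using t1.leaf_anc z(1) assms by blast
  qed
  then show ?thesis using assms t1.sf_refl by blast
qed

lemma finest_part: "t1.part (snd ` arcs T1) = {{x} | x. x \<in> X}"
  unfolding t1.part_def using finest_cls by auto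

lemma single_aaf: "acyclic_af X Ts {{x} | x. x \<in> X}"
proof -
  let ?P = "{{x} | x. x \<in> X}"
  have rc: "restr_clusters X T {x} = {{x}}" if "T \<in> set Ts" "x \<in> X" for T x
  proof -
    interpret p: phy X T using phyT that(1) .
    have "lbl T x \<in> verts T" "x \<in> clus X T (lbl T x)" using p.lbl_leaf that(2) unfolding clus_def by auto
    then show ?thesis unfolding restr_clusters_def by blast
  qed
  have sp: "span X T {x} \<subseteq> {lbl T x}" if "T \<in> set Ts" "x \<in> X" for T x
  proof -
    interpret p: phy X T using phyT that(1) .
    show ?thesis unfolding span_def p.lca_single[OF that(2)] using p.leaf_down[OF that(2)] by blast
  qed
  have af: "agreement_forest X Ts ?P"
  proof (rule af_intro)
    show "\<forall>T\<in>set Ts. \<forall>B\<in>?P. restr_clusters X T B = restr_clusters X T1 B" using rc hd_in by auto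
    show "\<forall>T\<in>set Ts. \<forall>B\<in>?P. \<forall>B'\<in>?P. B \<noteq> B' \<longrightarrow> span X T B \<inter> span X T B' = {}"
    proof (intro ballI impI)
      fix T B B' assume T: "T \<in> set Ts" and B: "B \<in> ?P" "B' \<in> ?P" "B \<noteq> B'"
      obtain x y where xy: "B = {x}" "B' = {y}" "x \<in> X" "y \<in> X" "x \<noteq> y" using B by blast
      interpret p: phy X T using phyT T .
      have "lbl T x \<noteq> lbl T y" using p.lbl_inj xy by blast
      then show "span X T B \<inter> span X T B' = {}" using sp[OF T xy(3)] sp[OF T xy(4)] xy by blast
    qed
  qed auto
  have "GF X Ts ?P = {}"
  proof -
    have False if hB: "(B, B') \<in> GF X Ts ?P" for B B'
    proof -
      obtain x y where xy: "B = {x}" "B' = {y}" "x \<in> X" "y \<in> X" "x \<noteq> y"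
        using hB unfolding GF_def gf_arc_def by blast
      obtain T where T: "T \<in> set Ts" "(lca X T B, lca X T B') \<in> (arcs T)\<^sup>*"
        using hB unfolding GF_def gf_arc_def by blast
      interpret p: phy X T using phyT T(1) .
      show False using T(2) p.lca_single xy p.leaf_anc by metis
    qed
    then show ?thesis by auto
  qed
  then show ?thesis using af unfolding acyclic_af_def acyclic_def by simp
qed

lemma ea_le: assumes "E \<subseteq> arcs T1 - D'" "acyclic_af X Ts (yield X T1 (D' \<union> E))"
  shows "ea X Ts D' \<le> card E"
  unfolding ea_def by (rule Least_le) (use assms in blast)

lemma ea_attained: assumes "D' \<subseteq> arcs T1"
  shows "\<exists>E. E \<subseteq> arcs T1 - D' \<and> card E = ea X Ts D' \<and> acyclic_af X Ts (yield X T1 (D' \<union> E))"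
proof -
  have "D' \<union> (arcs T1 - D') = arcs T1" using assms by blast
  then have "yield X T1 (D' \<union> (arcs T1 - D')) = {{x} | x. x \<in> X}"
    using t1.yield_char[of "arcs T1"] finest_part by simp
  then have "acyclic_af X Ts (yield X T1 (D' \<union> (arcs T1 - D')))" using single_aaf by simp
  then have "\<exists>n E. E \<subseteq> arcs T1 - D' \<and> card E = n \<and> acyclic_af X Ts (yield X T1 (D' \<union> E))"
    by (intro exI[of _ "card (arcs T1 - D')"] exI[of _ "arcs T1 - D'"]) simp
  then show ?thesis unfolding ea_def by (rule LeastI_ex)
qed

end


context multi begin

lemma finish:
  assumes D: "D \<subseteq> arcs T1"
    and E': "E' \<subseteq> arcs T1 - D" "e \<in> E'" "card E' = ea X Ts D" "acyclic_af X Ts (yield X T1 (D \<union> E'))"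
    and e': "e' \<in> arcs T1 - D"
  shows "int (ea X Ts (D \<union> {e})) = int (ea X Ts D) - 1 \<and> int (ea X Ts (D \<union> {e, e'})) \<le> int (ea X Ts D) - 1"
proof -
  have fin: "finite E'" using E'(1) t1.fin_arcs finite_subset by blast
  have eA: "e \<in> arcs T1 - D" using E' by blast
  have s1: "E' - {e} \<subseteq> arcs T1 - (D \<union> {e})" using E'(1) by blast
  have u1: "D \<union> {e} \<union> (E' - {e}) = D \<union> E'" using E'(2) by blast
  have h1: "ea X Ts (D \<union> {e}) \<le> card (E' - {e})" using ea_le[OF s1] E'(4) u1 by simp
  have "card E' > 0" using fin E'(2) by (auto simp: card_gt_0_iff)
  then have c1: "card (E' - {e}) = card E' - 1" "card E' \<ge> 1"
    using card_Diff_singleton[OF E'(2)] by simp_all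
  have De: "D \<union> {e} \<subseteq> arcs T1" using D eA by blast
  obtain E2 where E2: "E2 \<subseteq> arcs T1 - (D \<union> {e})" "card E2 = ea X Ts (D \<union> {e})"
    "acyclic_af X Ts (yield X T1 (D \<union> {e} \<union> E2))" using ea_attained[OF De] by blast
  have fin2: "finite E2" using E2(1) t1.fin_arcs finite_subset by blast
  have s2: "insert e E2 \<subseteq> arcs T1 - D" using E2(1) eA by blast
  have u2: "D \<union> insert e E2 = D \<union> {e} \<union> E2" by blast
  have "ea X Ts D \<le> card (insert e E2)" using ea_le[OF s2] E2(3) u2 by simp
  also have "\<dots> \<le> Suc (card E2)" using fin2 by (simp add: card_insert_if)
  finally have h2: "ea X Ts D \<le> Suc (ea X Ts (D \<union> {e}))" using E2(2) by simp
  have s3: "E' - {e, e'} \<subseteq> arcs T1 - (D \<union> {e, e'})" using E'(1) by blast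
  have u3: "D \<union> {e, e'} \<union> (E' - {e, e'}) = insert e' (D \<union> E')" using E'(2) by blast
  have DE: "D \<union> E' \<subseteq> arcs T1" "insert e' (D \<union> E') \<subseteq> arcs T1" using D E'(1) e' by blast+
  have "acyclic_af X Ts (t1.part (snd ` (D \<union> E')))" using E'(4) t1.yield_char[OF DE(1)] by simp
  then have "acyclic_af X Ts (t1.part (insert (snd e') (snd ` (D \<union> E'))))" by (rule refine)
  then have "acyclic_af X Ts (yield X T1 (D \<union> {e, e'} \<union> (E' - {e, e'})))"
    using t1.yield_char[OF DE(2)] u3 by simp
  then have "ea X Ts (D \<union> {e, e'}) \<le> card (E' - {e, e'})" using ea_le[OF s3] by simp
  also have "\<dots> \<le> card (E' - {e})" using fin by (intro card_mono) auto
  finally have h3: "ea X Ts (D \<union> {e, e'}) \<le> card (E' - {e})" .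
  show ?thesis using h1 h2 h3 c1 E'(3) by linarith
qed

lemma do_exch:
  assumes D: "D \<subseteq> arcs T1" and Est: "Est \<subseteq> arcs T1 - D" "acyclic_af X Ts (yield X T1 (D \<union> Est))"
    and rs: "(r,s) \<in> arcs T1 - D" "s \<notin> snd ` (D \<union> Est)"
    and w0: "w0 \<in> snd ` (D \<union> Est) - snd ` D"
    and eqv: "\<forall>p\<in>X. \<forall>q\<in>X. t1.sf (insert s (snd ` (D \<union> Est) - {w0})) p q \<longleftrightarrow> t1.sf (snd ` (D \<union> Est)) p q"
  shows "\<exists>E'. E' \<subseteq> arcs T1 - D \<and> (r,s) \<in> E' \<and> card E' = card Est \<and> acyclic_af X Ts (yield X T1 (D \<union> E'))"
proof -
  obtain e0 where e0: "e0 \<in> Est" "snd e0 = w0" using w0 by force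
  define E' where "E' = insert (r,s) (Est - {e0})"
  have fin: "finite Est" using Est(1) t1.fin_arcs finite_subset by blast
  have rsn: "(r,s) \<notin> Est - {e0}" using rs(2) by force
  have cE: "card E' = card Est"
    unfolding E'_def using fin rsn e0(1) by (simp add: card_Diff_singleton) (metis Suc_pred card_gt_0_iff empty_iff)
  have uniq: "e = e0" if h: "e \<in> Est" "snd e = w0" for e
  proof -
    obtain a where a: "e = (a,w0)" using h(2) by (cases e) auto
    obtain a0 where a0: "e0 = (a0,w0)" using e0(2) by (cases e0) auto
    have "(a,w0) \<in> arcs T1" "(a0,w0) \<in> arcs T1" using a a0 h(1) e0(1) Est(1) by blast+
    then have "a = a0" by (rule t1.unique_parent)
    then show ?thesis using a a0 by simp
  qed
  have sndE: "snd ` (D \<union> E') = insert s (snd ` (D \<union> Est) - {w0})"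
  proof
    show "snd ` (D \<union> E') \<subseteq> insert s (snd ` (D \<union> Est) - {w0})"
    proof
      fix z assume "z \<in> snd ` (D \<union> E')"
      then obtain e where e: "e \<in> D \<union> E'" "z = snd e" by blast
      show "z \<in> insert s (snd ` (D \<union> Est) - {w0})"
      proof (cases "e \<in> D")
        case True then show ?thesis using e w0 by force
      next
        case False
        then have "e = (r,s) \<or> (e \<in> Est \<and> e \<noteq> e0)" using e(1) unfolding E'_def by blast
        then show ?thesis
        proof
          assume "e = (r,s)" then show ?thesis using e(2) by simp
        next
          assume h: "e \<in> Est \<and> e \<noteq> e0"
          then have "snd e \<noteq> w0" using uniq by blast
          moreover have "snd e \<in> snd ` (D \<union> Est)" using h by blast
          ultimately show ?thesis using e(2) by blast
        qed
      qed
    qed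
    show "insert s (snd ` (D \<union> Est) - {w0}) \<subseteq> snd ` (D \<union> E')"
    proof
      fix z assume z: "z \<in> insert s (snd ` (D \<union> Est) - {w0})"
      show "z \<in> snd ` (D \<union> E')"
      proof (cases "z = s")
        case True then show ?thesis unfolding E'_def by force
      next
        case False
        then obtain e where e: "e \<in> D \<union> Est" "z = snd e" "z \<noteq> w0" using z by blast
        then have "e \<in> D \<union> E'" using e0(2) unfolding E'_def by auto
        then show ?thesis using e(2) by blast
      qed
    qed
  qed
  have sub: "D \<union> E' \<subseteq> arcs T1" "D \<union> Est \<subseteq> arcs T1" using D Est(1) rs(1) unfolding E'_def by blast+
  have "yield X T1 (D \<union> E') = t1.part (insert s (snd ` (D \<union> Est) - {w0}))"
    using t1.yield_char[OF sub(1)] sndE by simp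
  also have "\<dots> = t1.part (snd ` (D \<union> Est))" using t1.part_eq eqv by blast
  also have "\<dots> = yield X T1 (D \<union> Est)" using t1.yield_char[OF sub(2)] by simp
  finally have "acyclic_af X Ts (yield X T1 (D \<union> E'))" using Est(2) by simp
  moreover have "E' \<subseteq> arcs T1 - D" using Est(1) rs(1) unfolding E'_def by blast
  ultimately show ?thesis using cE unfolding E'_def by blast
qed

end


context multi begin

lemma root_lemma:
  assumes D: "D \<subseteq> arcs T1" and afP: "agreement_forest X Ts (yield X T1 D)"
    and B: "B \<in> yield X T1 D"
    and ch: "children T1 (lca X T1 B) = {c,d}" "c \<noteq> d"
    and Est: "Est \<subseteq> arcs T1 - D" "card Est = ea X Ts D" "acyclic_af X Ts (yield X T1 (D \<union> Est))"
  shows "(\<exists>e E'. e \<in> arcs T1 - D \<and> fst e = lca X T1 B \<and> E' \<subseteq> arcs T1 - D \<and> e \<in> E' \<and>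
            card E' = ea X Ts D \<and> acyclic_af X Ts (yield X T1 (D \<union> E'))) \<or>
         (\<exists>B0 \<in> yield X T1 (D \<union> Est). B0 \<subseteq> B \<and> (\<forall>T\<in>set Ts. lca X T B0 = lca X T B))"
proof -
  let ?r = "lca X T1 B"
  define WD where "WD = snd ` D"
  define Wst where "Wst = snd ` (D \<union> Est)"
  have PD: "yield X T1 D = t1.part WD" unfolding WD_def using t1.yield_char[OF D] .
  have DE: "D \<union> Est \<subseteq> arcs T1" using D Est(1) by blast
  have PE: "yield X T1 (D \<union> Est) = t1.part Wst" unfolding Wst_def using t1.yield_char[OF DE] .
  have WDW: "WD \<subseteq> Wst" unfolding WD_def Wst_def by blast
  have afP': "agreement_forest X Ts (t1.part WD)" using afP PD by simp
  have B': "B \<in> t1.part WD" using B PD by simp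
  note sd = sides[OF afP' B' ch]
  have arc_ok: "(?r, a) \<in> arcs T1 - D" if "a \<in> {c,d}" for a
  proof -
    have "(?r, a) \<in> arcs T1" using that ch unfolding children_def by blast
    moreover have "(?r, a) \<notin> D" using that sd(3,4) unfolding WD_def by force
    ultimately show ?thesis by blast
  qed
  have est_case: ?thesis if ha: "a \<in> {c,d}" "a \<in> snd ` Est" for a
  proof -
    obtain e where e: "e \<in> Est" "snd e = a" using ha(2) by force
    obtain p where p: "e = (p, a)" using e(2) by (cases e) auto
    have "(p, a) \<in> arcs T1" "(?r, a) \<in> arcs T1" using p e Est(1) arc_ok[OF ha(1)] by blast+
    then have "p = ?r" by (rule t1.unique_parent)
    then have "fst e = ?r" using p by simp
    then show ?thesis using e(1) Est by blast
  qed
  show ?thesis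
  proof (cases "c \<in> snd ` Est \<or> d \<in> snd ` Est")
    case True then show ?thesis using est_case by blast
  next
    case False
    then have cdW: "c \<notin> Wst" "d \<notin> Wst" using sd(3,4) unfolding WD_def Wst_def by blast+
    show ?thesis
    proof (cases "\<exists>x\<in>B. \<exists>y\<in>B. (c, lbl T1 x) \<in> (arcs T1)\<^sup>* \<and> (d, lbl T1 y) \<in> (arcs T1)\<^sup>* \<and> t1.sf Wst x y")
      case True
      then obtain x y where xy: "x \<in> B" "y \<in> B" "(c, lbl T1 x) \<in> (arcs T1)\<^sup>*" "(d, lbl T1 y) \<in> (arcs T1)\<^sup>*" "t1.sf Wst x y"
        by blast
      have BX: "B \<subseteq> X" using t1.part_sub B' by blast
      define B0 where "B0 = {z \<in> X. t1.sf Wst z x}"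
      have B0P: "B0 \<in> yield X T1 (D \<union> Est)" unfolding B0_def PE using t1.part_in xy(1) BX by blast
      have "B = {z \<in> X. t1.sf WD z x}" using t1.part_mem[OF B' xy(1)] .
      then have B0B: "B0 \<subseteq> B" unfolding B0_def using t1.sf_mono[OF WDW] by blast
      have x0: "x \<in> B0" "y \<in> B0" unfolding B0_def using xy BX t1.sf_refl t1.sf_sym by blast+
      have "\<forall>T\<in>set Ts. lca X T B0 = lca X T B"
        using lca_keep[OF afP B ch B0B x0(1) xy(3) x0(2) xy(4)] by blast
      then show ?thesis using B0P B0B by blast
    next
      case False
      have notalive: "\<forall>x\<in>B. \<forall>y\<in>B. (c, lbl T1 x) \<in> (arcs T1)\<^sup>* \<longrightarrow> (d, lbl T1 y) \<in> (arcs T1)\<^sup>* \<longrightarrow> \<not> t1.sf Wst x y"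
        using False by blast
      have gen: ?thesis if sc: "children T1 ?r = {s,t}" "s \<noteq> t" "s \<in> {c,d}" "s \<notin> Wst"
        and x0: "x0 \<in> B" "(s, lbl T1 x0) \<in> (arcs T1)\<^sup>*"
        and y0: "y0 \<in> B" "(t, lbl T1 y0) \<in> (arcs T1)\<^sup>*"
        and dead: "\<forall>x\<in>B. (s, lbl T1 x) \<in> (arcs T1)\<^sup>* \<longrightarrow> (\<exists>w\<in>Wst. (?r,w) \<in> (arcs T1)\<^sup>+ \<and> (w, lbl T1 x) \<in> (arcs T1)\<^sup>*)"
        for s t x0 y0
      proof -
        obtain w0 where w0: "w0 \<in> Wst - WD"
          "\<forall>p\<in>X. \<forall>q\<in>X. t1.sf (insert s (Wst - {w0})) p q \<longleftrightarrow> t1.sf Wst p q"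
          using t1.exch[OF sc(1,2) WDW sc(4) B' x0 y0 dead] by blast
        obtain E' where E': "E' \<subseteq> arcs T1 - D" "(?r,s) \<in> E'" "card E' = card Est"
          "acyclic_af X Ts (yield X T1 (D \<union> E'))"
          using do_exch[OF D Est(1) Est(3) arc_ok[OF sc(3)], of w0] sc(4) w0
          unfolding Wst_def WD_def by blast
        have "(?r,s) \<in> arcs T1 - D" "fst (?r,s) = ?r" "card E' = ea X Ts D" using arc_ok[OF sc(3)] E'(3) Est(2) by simp_all
        then have "\<exists>e E'. e \<in> arcs T1 - D \<and> fst e = ?r \<and> E' \<subseteq> arcs T1 - D \<and> e \<in> E' \<and>
            card E' = ea X Ts D \<and> acyclic_af X Ts (yield X T1 (D \<union> E'))"
          using E'(1,2,4) by blast
        then show ?thesis by (rule disjI1)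
      qed
      from t1.dead_side[OF ch sd(5) notalive] show ?thesis
      proof
        assume "\<forall>x\<in>B. (c, lbl T1 x) \<in> (arcs T1)\<^sup>* \<longrightarrow> (\<exists>w\<in>Wst. (?r,w) \<in> (arcs T1)\<^sup>+ \<and> (w, lbl T1 x) \<in> (arcs T1)\<^sup>*)"
        then show ?thesis using gen[of c d] ch cdW sd(1,2) by blast
      next
        assume "\<forall>x\<in>B. (d, lbl T1 x) \<in> (arcs T1)\<^sup>* \<longrightarrow> (\<exists>w\<in>Wst. (?r,w) \<in> (arcs T1)\<^sup>+ \<and> (w, lbl T1 x) \<in> (arcs T1)\<^sup>*)"
        moreover have "children T1 ?r = {d,c}" using ch(1) by blast
        ultimately show ?thesis using gen[of d c] ch(2) cdW sd(1,2) by blast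
      qed
    qed
  qed
qed

end

theorem lemma3:
  fixes X :: "'x set" and Ts :: "('x, 'v) ptree list" and D :: "('v \<times> 'v) set"
    and B B' :: "'x set"
  assumes "length Ts \<ge> 2"
    and "\<forall>T \<in> set Ts. phylo_tree X T"
    and "D \<subseteq> arcs (hd Ts)"
    and "agreement_forest X Ts (yield X (hd Ts) D)"
    and "B \<in> yield X (hd Ts) D" and "B' \<in> yield X (hd Ts) D"
    and "gf_arc X Ts B B'" and "gf_arc X Ts B' B"
  shows "\<exists>er er'. er \<in> arcs (hd Ts) - D \<and> fst er = lca X (hd Ts) B \<and>
                  er' \<in> arcs (hd Ts) - D \<and> fst er' = lca X (hd Ts) B' \<and>
                  (\<exists>e \<in> {er, er'}. int (ea X Ts (D \<union> {e})) = int (ea X Ts D) - 1) \<and>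
                  int (ea X Ts (D \<union> {er, er'})) \<le> int (ea X Ts D) - 1"
proof -
  have ne: "Ts \<noteq> []" using assms(1) by auto
  interpret m: multi X Ts using assms(2) ne by unfold_locales
  let ?T1 = "hd Ts"
  note D = assms(3) and afP = assms(4) and B = assms(5) and B' = assms(6)
  obtain c d where ch: "children ?T1 (lca X ?T1 B) = {c,d}" "c \<noteq> d"
    using m.children_two[OF afP B B' assms(7)] by blast
  obtain c' d' where ch': "children ?T1 (lca X ?T1 B') = {c',d'}" "c' \<noteq> d'"
    using m.children_two[OF afP B' B assms(8)] by blast
  have arcB: "(lca X ?T1 B, c) \<in> arcs ?T1 - D" and arcB': "(lca X ?T1 B', c') \<in> arcs ?T1 - D"
  proof -
    have PD: "yield X ?T1 D = m.t1.part (snd ` D)" using m.t1.yield_char[OF D] .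
    have afP': "agreement_forest X Ts (m.t1.part (snd ` D))" using afP PD by simp
    have "c \<notin> snd ` D" using m.sides(3)[OF afP' _ ch] B PD by simp
    moreover have "(lca X ?T1 B, c) \<in> arcs ?T1" using ch unfolding children_def by blast
    ultimately show "(lca X ?T1 B, c) \<in> arcs ?T1 - D" by force
    have "c' \<notin> snd ` D" using m.sides(3)[OF afP' _ ch'] B' PD by simp
    moreover have "(lca X ?T1 B', c') \<in> arcs ?T1" using ch' unfolding children_def by blast
    ultimately show "(lca X ?T1 B', c') \<in> arcs ?T1 - D" by force
  qed
  obtain Est where Est: "Est \<subseteq> arcs ?T1 - D" "card Est = ea X Ts D" "acyclic_af X Ts (yield X ?T1 (D \<union> Est))"
    using m.ea_attained[OF D] by blast
  note R1 = m.root_lemma[OF D afP B ch Est]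
  note R2 = m.root_lemma[OF D afP B' ch' Est]
  show ?thesis
  proof (cases "\<exists>e E'. e \<in> arcs ?T1 - D \<and> fst e = lca X ?T1 B \<and> E' \<subseteq> arcs ?T1 - D \<and> e \<in> E' \<and>
            card E' = ea X Ts D \<and> acyclic_af X Ts (yield X ?T1 (D \<union> E'))")
    case True
    then obtain e E' where eE: "e \<in> arcs ?T1 - D" "fst e = lca X ?T1 B" "E' \<subseteq> arcs ?T1 - D" "e \<in> E'"
      "card E' = ea X Ts D" "acyclic_af X Ts (yield X ?T1 (D \<union> E'))" by blast
    have "int (ea X Ts (D \<union> {e})) = int (ea X Ts D) - 1 \<and> int (ea X Ts (D \<union> {e, (lca X ?T1 B', c')})) \<le> int (ea X Ts D) - 1"
      using m.finish[OF D eE(3,4,5,6) arcB'] .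
    then show ?thesis using eE(1,2) arcB' by (intro exI[of _ e] exI[of _ "(lca X ?T1 B', c')"]) auto
  next
    case F1: False
    show ?thesis
    proof (cases "\<exists>e E'. e \<in> arcs ?T1 - D \<and> fst e = lca X ?T1 B' \<and> E' \<subseteq> arcs ?T1 - D \<and> e \<in> E' \<and>
              card E' = ea X Ts D \<and> acyclic_af X Ts (yield X ?T1 (D \<union> E'))")
      case True
      then obtain e E' where eE: "e \<in> arcs ?T1 - D" "fst e = lca X ?T1 B'" "E' \<subseteq> arcs ?T1 - D" "e \<in> E'"
        "card E' = ea X Ts D" "acyclic_af X Ts (yield X ?T1 (D \<union> E'))" by blast
      have "int (ea X Ts (D \<union> {e})) = int (ea X Ts D) - 1 \<and> int (ea X Ts (D \<union> {e, (lca X ?T1 B, c)})) \<le> int (ea X Ts D) - 1"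
        using m.finish[OF D eE(3,4,5,6) arcB] .
      moreover have "{(lca X ?T1 B, c), e} = {e, (lca X ?T1 B, c)}" by blast
      ultimately show ?thesis using eE(1,2) arcB by (intro exI[of _ "(lca X ?T1 B, c)"] exI[of _ e]) auto
    next
      case F2: False
      obtain B0 where B0: "B0 \<in> yield X ?T1 (D \<union> Est)" "B0 \<subseteq> B" "\<forall>T\<in>set Ts. lca X T B0 = lca X T B"
        using R1 F1 by blast
      obtain B0' where B0': "B0' \<in> yield X ?T1 (D \<union> Est)" "B0' \<subseteq> B'" "\<forall>T\<in>set Ts. lca X T B0' = lca X T B'"
        using R2 F2 by blast
      have afE: "agreement_forest X Ts (yield X ?T1 (D \<union> Est))" and acE: "acyclic (GF X Ts (yield X ?T1 (D \<union> Est)))"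
        using Est(3) unfolding acyclic_af_def by blast+
      have BB: "B \<noteq> B'" using assms(7) unfolding gf_arc_def by blast
      have "B \<inter> B' = {}" using af_disj[OF afP B B' BB] .
      moreover have "B0 \<noteq> {}" using af_ne[OF afE B0(1)] .
      ultimately have neq: "B0 \<noteq> B0'" using B0(2) B0'(2) by blast
      have "gf_arc X Ts B0 B0'" "gf_arc X Ts B0' B0"
        using assms(7,8) neq B0(3) B0'(3) unfolding gf_arc_def by auto
      then have "(B0, B0') \<in> GF X Ts (yield X ?T1 (D \<union> Est))" "(B0', B0) \<in> GF X Ts (yield X ?T1 (D \<union> Est))"
        unfolding GF_def using B0(1) B0'(1) by blast+
      then have "(B0, B0) \<in> (GF X Ts (yield X ?T1 (D \<union> Est)))\<^sup>+" by (meson trancl.simps)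
      then show ?thesis using acE unfolding acyclic_def by blast
    qed
  qed
qed


end
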